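(* Let $q \ge 2$ and $n$ be integers, and let $k$ be an odd positive integer with $k \le \lfloor n/2\rfloor - 2$. For $i \in [1, \lfloor n/2\rfloor]$ define $$\alpha_{i,0} = -\frac{n(q-1)}{i}\sum_{j=0}^{i-1}(1-q)^j\binom{n-2i+j}{n-2i}\binom{2i-2-j}{i-1}.$$ If $(k+1)(2q-1) - (q-1)n \ge 0$ and $$\big((k+1)(2q-1) - (q-1)n\big)\,\alpha_{k+1,0} < \alpha_{k+2,0},$$ then $k$-uniform states in $(\mathbb{C}^q)^{\otimes n}$ do not exist.
   Context: For integers $a \le b$, $[a,b]$ denotes $\{a,a+1,\dots,b\}$. A pure state $|\psi\rangle \in (\mathbb{C}^q)^{\otimes n}$ is called $k$-uniform if, with $\rho = |\psi\rangle\langle\psi|$, for every subset $S \subseteq \{1,\dots,n\}$ with $|S| = k$ the reduced state of $\rho$ on the parties in $S$ equals $I/q^k$, where $I$ is the identity on $(\mathbb{C}^q)^{\otimes k}$. *)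

theory Defs
  imports Complex_Main
begin

text \<open>Computational basis of (C^q)^{\<otimes> n}: words of length n over {0..<q}.
  Party i (0-based, i < n) is the i-th letter.\<close>
definition basis :: "nat \<Rightarrow> nat \<Rightarrow> nat list set" where
  "basis q n = {xs. length xs = n \<and> set xs \<subseteq> {..<q}}"

text \<open>Entry of the reduced density matrix of |psi><psi| on the parties in S,
  at row index a|_S and column index b|_S (a, b full basis words; only their
  S-components matter): partial trace over the complement of S.\<close>
definition reduced :: "nat \<Rightarrow> nat \<Rightarrow> (nat list \<Rightarrow> complex) \<Rightarrow> nat set \<Rightarrow> nat list \<Rightarrow> nat list \<Rightarrow> complex" where
  "reduced q n psi S a b =
     (\<Sum>x\<in>basis q n. \<Sum>y\<in>basis q n.
        if (\<forall>i<n. i \<in> S \<longrightarrow> x ! i = a ! i \<and> y ! i = b ! i) \<and>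
           (\<forall>i<n. i \<notin> S \<longrightarrow> x ! i = y ! i)
        then psi x * cnj (psi y) else 0)"

text \<open>psi is a pure state (unit vector, given by its coefficients on the basis)
  whose k-party marginals are all maximally mixed.\<close>
definition k_uniform :: "nat \<Rightarrow> nat \<Rightarrow> nat \<Rightarrow> (nat list \<Rightarrow> complex) \<Rightarrow> bool" where
  "k_uniform q n k psi \<longleftrightarrow>
     (\<Sum>x\<in>basis q n. (cmod (psi x))\<^sup>2) = 1 \<and>
     (\<forall>S. S \<subseteq> {..<n} \<and> card S = k \<longrightarrow>
        (\<forall>a\<in>basis q n. \<forall>b\<in>basis q n.
           reduced q n psi S a b =
             (if (\<forall>i\<in>S. a ! i = b ! i) then 1 / of_nat (q ^ k) else 0)))"

definition alpha0 :: "nat \<Rightarrow> nat \<Rightarrow> nat \<Rightarrow> real" where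
  "alpha0 q n i = - (real n * (real q - 1) / real i) *
     (\<Sum>j<i. (1 - real q) ^ j * real ((n - 2*i + j) choose (n - 2*i))
                               * real ((2*i - 2 - j) choose (i - 1)))"

end

theory Submission
  imports Defs "HOL-Library.FuncSet" "HOL-Computational_Algebra.Polynomial_FPS"
begin
unbundle fps_syntax

lemma inv_lin_pow_aux:
  fixes a :: real
  defines "F \<equiv> (\<lambda>r. Abs_fps (\<lambda>j. of_nat ((r + j) choose j) * (-a)^j))"
  shows "F r * (1 + fps_const a * fps_X)^(Suc r) = 1"
proof (induction r)
  case 0
  show ?case
  proof (rule fps_ext)
    fix j
    show "(F 0 * (1 + fps_const a * fps_X) ^ Suc 0) $ j = (1::real fps) $ j"
      by (cases j) (simp_all add: F_def algebra_simps fps_X_mult_right_nth)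
  qed
next
  case (Suc r)
  have "F (Suc r) * (1 + fps_const a * fps_X) = F r"
  proof (rule fps_ext)
    fix j
    show "(F (Suc r) * (1 + fps_const a * fps_X)) $ j = F r $ j"
    proof (cases j)
      case 0 then show ?thesis by (simp add: F_def)
    next
      case (Suc j')
      have "(F (Suc r) * (1 + fps_const a * fps_X)) $ j
          = of_nat ((Suc r + Suc j') choose Suc j') * (-a)^Suc j' + a * (of_nat ((Suc r + j') choose j') * (-a)^j')"
        using Suc by (simp add: F_def algebra_simps fps_X_mult_right_nth)
      also have "\<dots> = (-a)^Suc j' * (of_nat ((Suc r + Suc j') choose Suc j') - of_nat ((Suc r + j') choose j'))"
        by (simp add: algebra_simps)
      also have "of_nat ((Suc r + Suc j') choose Suc j') = (of_nat ((r + Suc j') choose Suc j') + of_nat ((Suc r + j') choose j') :: real)"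
        by (simp add: add_Suc_right)
      finally show ?thesis using Suc by (simp add: F_def)
    qed
  qed
  then have "F (Suc r) * (1 + fps_const a * fps_X) ^ Suc (Suc r) = F r * (1 + fps_const a * fps_X) ^ Suc r"
    by (metis (no_types, lifting) mult.assoc power_Suc2 mult.commute)
  with Suc show ?case by simp
qed

lemma inv_lin_pow:
  fixes a :: real
  shows "((inverse (1 + fps_const a * fps_X))^(Suc r)) $ j = of_nat ((r + j) choose j) * (-a)^j"
proof -
  define F where "F \<equiv> (\<lambda>r. Abs_fps (\<lambda>j. of_nat ((r + j) choose j) * (-a)^j :: real))"
  have "F r * (1 + fps_const a * fps_X)^(Suc r) = 1" unfolding F_def by (rule inv_lin_pow_aux)
  then have "inverse ((1 + fps_const a * fps_X)^(Suc r)) = F r"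
    by (intro fps_inverse_unique) (simp add: mult.commute)
  then have "(inverse (1 + fps_const a * fps_X))^(Suc r) = F r"
    by (metis fps_inverse_power)
  then show ?thesis by (simp add: F_def)
qed

lemma ofnat_fps_nth: "((of_nat i :: real fps) * f) $ j = of_nat i * f $ j"
  by (simp add: fps_of_nat)

lemma coeff_deriv_v:
  fixes v w :: "real fps"
  assumes vw: "v * w = 1" and m: "1 \<le> m"
  shows "(fps_deriv ((fps_X * v)^i) * w^m) $ (m-1) = (if i = m then of_nat m else 0)"
proof -
  have dX: "fps_deriv ((fps_X::real fps)^i) = of_nat i * fps_X^(i-1)"
    by (simp add: fps_deriv_power')
  have der: "fps_deriv ((fps_X * v)^i) = of_nat i * fps_X^(i-1) * v^i + fps_X^i * fps_deriv (v^i)"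
    by (simp add: power_mult_distrib dX)
  consider "i = 0" | "i > m" | "1 \<le> i" "i \<le> m" by linarith
  then show ?thesis
  proof cases
    case 1 then show ?thesis using m by simp
  next
    case 2
    have "fps_deriv ((fps_X * v)^i) * w^m = fps_X^(i-1) * ((of_nat i * v^i + fps_X * fps_deriv (v^i)) * w^m)"
    proof -
      have "(fps_X::real fps)^i = fps_X^(i-1) * fps_X" using 2
        by (metis Suc_pred' gr_implies_not0 neq0_conv power_Suc2)
      then show ?thesis unfolding der by (simp add: algebra_simps)
    qed
    then have "(fps_deriv ((fps_X * v)^i) * w^m) $ (m-1) = (fps_X^(i-1) * ((of_nat i * v^i + fps_X * fps_deriv (v^i)) * w^m)) $ (m-1)"
      by (rule arg_cong)
    also have "\<dots> = 0" by (subst fps_X_power_mult_nth) (use 2 m in simp)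
    finally show ?thesis using 2 by simp
  next
    case 3
    define s where "s = m - i"
    have vi: "v^i * w^m = w^s"
    proof -
      have "w^m = w^i * w^s" using 3 by (simp add: s_def flip: power_add)
      then show ?thesis by (simp add: mult.assoc[symmetric] flip: power_mult_distrib add: vw)
    qed
    have t1: "(of_nat i * fps_X^(i-1) * v^i * w^m) $ (m-1) = of_nat i * (w^s) $ s"
    proof -
      have "of_nat i * fps_X^(i-1) * v^i * w^m = of_nat i * (fps_X^(i-1) * w^s)"
        using vi by (simp add: algebra_simps)
      then have "(of_nat i * fps_X^(i-1) * v^i * w^m) $ (m-1) = (of_nat i * (fps_X^(i-1) * w^s)) $ (m-1)"
        by (rule arg_cong)
      also have "\<dots> = of_nat i * (w^s) $ (m - 1 - (i - 1))"
        using 3 by (simp only: ofnat_fps_nth fps_X_power_mult_nth) simp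
      also have "m - 1 - (i - 1) = s" using 3 by (simp add: s_def)
      finally show ?thesis .
    qed
    have sp: "(fps_deriv ((fps_X * v)^i) * w^m) $ (m-1) = (of_nat i * fps_X^(i-1) * v^i * w^m) $ (m-1) + (fps_X^i * fps_deriv (v^i) * w^m) $ (m-1)"
      by (simp only: der distrib_right fps_add_nth)
    show ?thesis
    proof (cases "i = m")
      case True
      have "(fps_X^i * fps_deriv (v^i) * w^m) $ (m-1) = 0"
        using True 3 by (simp add: mult.assoc fps_X_power_mult_nth)
      then show ?thesis using t1 True sp by (simp add: s_def)
    next
      case False
      then have s1: "s \<ge> 1" using 3 by (simp add: s_def)
      have dvw: "fps_deriv v * w + v * fps_deriv w = 0"
        using arg_cong[OF vw, of fps_deriv] by (simp add: add.commute)
      have dv: "fps_deriv v = - (v * v * fps_deriv w)"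
      proof -
        have "fps_deriv v = fps_deriv v * (v * w)" using vw by simp
        also have "\<dots> = v * (fps_deriv v * w)" by (simp add: algebra_simps)
        also have "\<dots> = v * (- (v * fps_deriv w))" using dvw by (metis add.commute add_eq_0_iff distrib_left mult_zero_right)
        finally show ?thesis by (simp add: algebra_simps)
      qed
      have "fps_deriv (v^i) * w^m = of_nat i * (fps_deriv v * v^(i-1)) * w^m"
        by (simp add: fps_deriv_power' algebra_simps)
      also have "\<dots> = - (of_nat i * ((v^(i-1) * v * v) * (w^(i-1) * w * w)) * (w^(s-1) * fps_deriv w))"
      proof -
        have wm: "w^m = w^(i-1) * w * w * w^(s-1)" using 3 s1
          by (simp add: s_def flip: power_add power_Suc power_Suc2)
        show ?thesis by (subst wm, subst dv) (simp add: mult_ac)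
      qed
      also have "(v^(i-1) * v * v) * (w^(i-1) * w * w) = 1"
      proof -
        have "(v^(i-1) * v * v) * (w^(i-1) * w * w) = (v*w)^(i-1) * (v*w) * (v*w)"
          by (simp add: power_mult_distrib mult_ac)
        then show ?thesis using vw by simp
      qed
      finally have d2: "fps_deriv (v^i) * w^m = - (of_nat i * (w^(s-1) * fps_deriv w))" by simp
      have dws: "(w^(s-1) * fps_deriv w) $ (s-1) = (w^s) $ s"
      proof -
        have "fps_deriv (w^s) = of_nat s * (w^(s-1) * fps_deriv w)"
          by (simp add: fps_deriv_power' algebra_simps)
        then have "(fps_deriv (w^s)) $ (s-1) = of_nat s * (w^(s-1) * fps_deriv w) $ (s-1)"
          by (simp add: ofnat_fps_nth)
        then show ?thesis using s1 by simp
      qed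
      have t2: "(fps_X^i * fps_deriv (v^i) * w^m) $ (m-1) = - (of_nat i * (w^s) $ s)"
      proof -
        have "m - 1 - i = s - 1" using 3 by (simp add: s_def)
        moreover have "\<not> m - 1 < i" using 3 False by simp
        ultimately show ?thesis using dws
          by (simp add: mult.assoc d2 fps_X_power_mult_nth ofnat_fps_nth)
      qed
      show ?thesis using t1 t2 False sp by simp
    qed
  qed
qed


lemma coeff_deriv_G:
  fixes a :: real
  defines "G \<equiv> 1 + fps_const a * fps_X"
  assumes m1: "1 \<le> m" and mn: "2*m \<le> n"
  shows "(fps_deriv (inverse G ^ n) * (G^2 * inverse (1 - fps_X))^m) $ (m-1)
     = - (real n * a) * (\<Sum>j<m. (-a)^j * real ((n - 2*m + j) choose (n-2*m)) * real ((2*m-2-j) choose (m-1)))"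
proof -
  define Gi where "Gi = inverse G"
  define J where "J = inverse (1 + fps_const (-1) * fps_X :: real fps)"
  have G0: "G $ 0 = 1" by (simp add: G_def)
  have GGi: "G * Gi = 1" unfolding Gi_def by (rule inverse_mult_eq_1') (simp add: G0)
  have dG: "fps_deriv G = fps_const a" by (simp add: G_def)
  have dGi: "fps_deriv Gi = - fps_const a * Gi^2"
    unfolding Gi_def by (simp add: fps_inverse_deriv G0 dG)
  have n1: "n \<ge> 1" using m1 mn by simp
  have "fps_deriv (Gi ^ n) = of_nat n * fps_deriv Gi * Gi^(n-1)" by (simp add: fps_deriv_power')
  also have "\<dots> = - (of_nat n * fps_const a) * Gi^(Suc n)"
  proof -
    have "Gi^2 * Gi^(n-1) = Gi^(Suc n)" using n1 by (simp flip: power_add)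
    then show ?thesis by (simp add: dGi mult_ac del: fps_const_neg)
  qed
  finally have d1: "fps_deriv (Gi ^ n) = - (of_nat n * fps_const a) * Gi^(Suc n)" .
  have J1: "inverse (1 - fps_X) = J"
  proof -
    have eq: "(1 + fps_const (- 1) * fps_X :: real fps) = 1 - fps_X"
      by (simp only: fps_const_neg[symmetric] fps_const_1_eq_1) simp
    show ?thesis unfolding J_def eq ..
  qed
  have GG: "Gi^(Suc n) * G^(2*m) = Gi^(Suc (n - 2*m))"
  proof -
    have "Gi^(Suc n) = Gi^(Suc (n - 2*m)) * Gi^(2*m)" using mn by (simp flip: power_add)
    then have "Gi^(Suc n) * G^(2*m) = Gi^(Suc (n - 2*m)) * (Gi^(2*m) * G^(2*m))"
      by (simp only: mult.assoc)
    also have "Gi^(2*m) * G^(2*m) = (G * Gi)^(2*m)" by (simp only: power_mult_distrib mult.commute)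
    finally show ?thesis using GGi by simp
  qed
  have "fps_deriv (inverse G ^ n) * (G^2 * inverse (1 - fps_X))^m
      = - (of_nat n * fps_const a) * (Gi^(Suc (n - 2*m)) * J^(Suc (m-1)))"
  proof -
    have "(G^2 * inverse (1 - fps_X))^m = G^(2*m) * J^(Suc (m-1))"
      using m1 by (simp add: J1 power_mult_distrib power_mult)
    then show ?thesis unfolding Gi_def[symmetric] d1 using GG
      by (simp add: mult_ac) (metis mult.assoc)
  qed
  also have "- (of_nat n * fps_const a) = fps_const (- (real n * a))" by (simp flip: fps_of_nat)
  finally have "(fps_deriv (inverse G ^ n) * (G^2 * inverse (1 - fps_X))^m) $ (m-1)
      = (fps_const (- (real n * a)) * (Gi^(Suc (n - 2*m)) * J^(Suc (m-1)))) $ (m-1)"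
    by (rule arg_cong)
  also have "\<dots> = - (real n * a) * (Gi^(Suc (n - 2*m)) * J^(Suc (m-1))) $ (m-1)"
    by (rule fps_mult_left_const_nth)
  also have "(Gi^(Suc (n - 2*m)) * J^(Suc (m-1))) $ (m-1)
     = (\<Sum>j=0..m-1. (real ((n - 2*m + j) choose j) * (-a)^j) * real ((m - 1 + (m - 1 - j)) choose (m-1-j)))"
    unfolding fps_mult_nth Gi_def J_def G_def inv_lin_pow by simp
  also have "\<dots> = (\<Sum>j<m. (-a)^j * real ((n - 2*m + j) choose (n-2*m)) * real ((2*m-2-j) choose (m-1)))"
  proof -
    have "{0..m-1} = {..<m}" using m1 by auto
    moreover have "real ((n - 2*m + j) choose j) * (-a)^j * real ((m - 1 + (m - 1 - j)) choose (m-1-j))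
        = (-a)^j * real ((n - 2*m + j) choose (n-2*m)) * real ((2*m-2-j) choose (m-1))" if "j < m" for j
    proof -
      have "(n - 2*m + j) choose j = (n - 2*m + j) choose (n-2*m)"
        by (metis add_diff_cancel_left' binomial_symmetric le_add1 add.commute)
      moreover have "m - 1 + (m - 1 - j) = 2*m-2-j" using that by simp
      moreover have "(2*m-2-j) choose (m-1-j) = (2*m-2-j) choose (m-1)"
      proof -
        have "m - 1 - j \<le> 2*m-2-j" using that by simp
        moreover have "2*m-2-j - (m-1-j) = m-1" using that by simp
        ultimately show ?thesis by (metis binomial_symmetric)
      qed
      ultimately show ?thesis by simp
    qed
    ultimately show ?thesis by (intro sum.cong) auto
  qed
  finally show ?thesis .
qed


lemma lagrange:
  fixes a :: real and n N j :: nat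
  assumes N: "2*N \<le> n" and j: "j \<le> N"
  defines "al \<equiv> (\<lambda>i. if i = 0 then 1 else - (real n * a / real i) *
      (\<Sum>l<i. (-a)^l * real ((n - 2*i + l) choose (n-2*i)) * real ((2*i-2-l) choose (i-1))))"
  shows "(\<Sum>i\<le>N. fps_const (al i) * (fps_X * (1 - fps_X))^i * (1 + fps_const a * fps_X)^(n-2*i)) $ j
         = (if j = 0 then 1 else 0)"
proof -
  define G where "G = 1 + fps_const a * fps_X"
  define Gi where "Gi = inverse G"
  define v where "v = (1 - fps_X) * Gi^2"
  define w where "w = G^2 * inverse (1 - fps_X :: real fps)"
  have G0: "G $ 0 = 1" by (simp add: G_def)
  have GGi: "G * Gi = 1" unfolding Gi_def by (rule inverse_mult_eq_1') (simp add: G0)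
  have OJ: "(1 - fps_X) * inverse (1 - fps_X :: real fps) = 1" by (rule inverse_mult_eq_1') simp
  have vw: "v * w = 1"
  proof -
    have "v * w = ((1 - fps_X) * inverse (1 - fps_X :: real fps)) * (G * Gi)^2"
      by (simp add: v_def w_def power_mult_distrib mult_ac)
    then show ?thesis using OJ GGi by simp
  qed
  have w0: "w $ 0 = 1" by (simp add: w_def G0 fps_power_zeroth power2_eq_square)
  define E where "E = Gi^n - (\<Sum>i\<le>N. fps_const (al i) * (fps_X * v)^i)"
  have trm: "(fps_X * (1 - fps_X))^i * G^(n-2*i) = G^n * (fps_X * v)^i" if "2*i \<le> n" for i
  proof -
    have Gn: "G^n = G^(n-2*i) * G^(2*i)" using that by (simp flip: power_add)
    have xv: "(fps_X * v)^i = (fps_X * (1 - fps_X))^i * Gi^(2*i)"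
      by (simp add: v_def power_mult_distrib power_mult mult.assoc)
    have "G^n * (fps_X * v)^i = (fps_X * (1 - fps_X))^i * G^(n-2*i) * (G^(2*i) * Gi^(2*i))"
      unfolding Gn xv by (simp only: mult_ac)
    also have "G^(2*i) * Gi^(2*i) = 1" using GGi by (simp flip: power_mult_distrib)
    finally show ?thesis by simp
  qed
  have T: "(\<Sum>i\<le>N. fps_const (al i) * (fps_X * (1 - fps_X))^i * G^(n-2*i)) = 1 - G^n * E"
  proof -
    have "(\<Sum>i\<le>N. fps_const (al i) * (fps_X * (1 - fps_X))^i * G^(n-2*i))
        = (\<Sum>i\<le>N. G^n * (fps_const (al i) * (fps_X * v)^i))"
    proof (rule sum.cong)
      fix i assume "i \<in> {..N}"
      then have "2*i \<le> n" using N by simp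
      then show "fps_const (al i) * (fps_X * (1 - fps_X))^i * G^(n-2*i) = G^n * (fps_const (al i) * (fps_X * v)^i)"
        using trm[of i] by (simp add: mult_ac)
    qed simp
    also have "\<dots> = G^n * (\<Sum>i\<le>N. fps_const (al i) * (fps_X * v)^i)"
      by (simp add: sum_distrib_left)
    also have "\<dots> = G^n * Gi^n - G^n * E" by (simp add: E_def algebra_simps)
    also have "G^n * Gi^n = 1" using GGi by (simp flip: power_mult_distrib)
    finally show ?thesis .
  qed
  have Ez: "E $ m = 0" if "m \<le> N" for m
    using that
  proof (induction m rule: less_induct)
    case (less m)
    show ?case
    proof (cases "m = 0")
      case True
      have "(\<Sum>i\<le>N. fps_const (al i) * (fps_X * v)^i) $ 0 = (\<Sum>i\<le>N. if i = 0 then 1 else 0)"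
        unfolding fps_sum_nth by (intro sum.cong) (simp_all add: fps_power_zeroth al_def)
      also have "\<dots> = 1" by simp
      finally show ?thesis using True G0 by (simp add: E_def Gi_def fps_power_zeroth)
    next
      case False
      then have m1: "1 \<le> m" by simp
      have IH: "E $ l = 0" if "l < m" for l using less that by simp
      obtain m' where m': "m = Suc m'" using False not0_implies_Suc by blast
      have A: "(fps_deriv E * w^m) $ (m-1) = of_nat m * E $ m"
      proof -
        have "(fps_deriv E * w^m) $ (m-1) = (\<Sum>i=0..<m'. fps_deriv E $ i * (w^m) $ (m' - i)) + fps_deriv E $ m' * (w^m) $ 0"
          unfolding fps_mult_nth m' by (simp add: atLeastLessThanSuc_atLeastAtMost[symmetric])
        also have "(\<Sum>i=0..<m'. fps_deriv E $ i * (w^m) $ (m' - i)) = 0"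
          by (intro sum.neutral) (auto simp: IH m')
        finally show ?thesis using w0 by (simp add: fps_power_zeroth m')
      qed
      have B: "(fps_deriv E * w^m) $ (m-1) = 0"
      proof -
        have mN: "m \<le> N" using less by simp
        have dE: "fps_deriv E * w^m = fps_deriv (Gi^n) * w^m - (\<Sum>i\<le>N. fps_const (al i) * (fps_deriv ((fps_X * v)^i) * w^m))"
        proof -
          have "fps_deriv E = fps_deriv (Gi^n) - (\<Sum>i\<le>N. fps_const (al i) * fps_deriv ((fps_X * v)^i))"
            unfolding E_def fps_deriv_sub fps_deriv_sum fps_deriv_mult_const_left ..
          then show ?thesis by (simp only: left_diff_distrib sum_distrib_right mult.assoc)
        qed
        have c1: "(fps_deriv (Gi^n) * w^m) $ (m-1) = real m * al m"
        proof -
          have "(fps_deriv (Gi^n) * w^m) $ (m-1) = - (real n * a) * (\<Sum>j<m. (-a)^j * real ((n - 2*m + j) choose (n-2*m)) * real ((2*m-2-j) choose (m-1)))"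
            unfolding Gi_def w_def G_def by (rule coeff_deriv_G) (use m1 mN N in auto)
          then show ?thesis using m1 by (simp add: al_def)
        qed
        have c2: "(\<Sum>i\<le>N. fps_const (al i) * (fps_deriv ((fps_X * v)^i) * w^m)) $ (m-1) = al m * real m"
        proof -
          have "(\<Sum>i\<le>N. fps_const (al i) * (fps_deriv ((fps_X * v)^i) * w^m)) $ (m-1)
              = (\<Sum>i\<le>N. al i * (if i = m then real m else 0))"
            unfolding fps_sum_nth fps_mult_left_const_nth coeff_deriv_v[OF vw m1] ..
          also have "\<dots> = al m * real m" using mN by (simp add: if_distrib cong: if_cong)
          finally show ?thesis .
        qed
        show ?thesis unfolding dE fps_sub_nth c1 c2 by simp
      qed
      from A B show ?thesis using m1 by simp
    qed
  qed
  have "(G^n * E) $ j = 0"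
    unfolding fps_mult_nth by (intro sum.neutral) (use j in \<open>auto intro!: Ez\<close>)
  then show ?thesis using T unfolding G_def by simp
qed



lemma sum_rev_atMost:
  fixes f :: "nat \<Rightarrow> 'a::comm_monoid_add"
  shows "(\<Sum>j\<le>n. f (n - j)) = (\<Sum>j\<le>n. f j)"
proof -
  have "(\<Sum>j\<le>n. f (n - j)) = (\<Sum>j<Suc n. f (Suc n - Suc j))" by (simp add: lessThan_Suc_atMost)
  also have "\<dots> = (\<Sum>j<Suc n. f j)" by (rule sum.nat_diff_reindex)
  finally show ?thesis by (simp add: lessThan_Suc_atMost)
qed

lemma even_rep:
  fixes a sg :: "nat \<Rightarrow> real" and n :: nat
  assumes sym: "\<And>j. j \<le> n \<Longrightarrow> a j = a (n - j)"
    and gen: "\<And>y. (\<Sum>j\<le>n. a j * (1-y)^j * (1+y)^(n-j)) = (\<Sum>t\<le>n. sg t * y^t)"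
  shows "(\<Sum>j\<le>n. a j * (1-y)^j * (1+y)^(n-j)) = (\<Sum>m\<le>n div 2. sg (2*m) * (y^2)^m)"
proof -
  define P where "P = (\<lambda>y. \<Sum>j\<le>n. a j * (1-y)^j * (1+y)^(n-j))"
  have Pm: "P (-y) = P y"
  proof -
    have "P (-y) = (\<Sum>j\<le>n. a j * (1+y)^j * (1-y)^(n-j))" by (simp add: P_def)
    also have "\<dots> = (\<Sum>j\<le>n. a (n - j) * (1+y)^(n-j) * (1-y)^(n-(n-j)))"
      by (rule sum_rev_atMost[symmetric])
    also have "\<dots> = (\<Sum>j\<le>n. a j * (1-y)^j * (1+y)^(n-j))"
      by (intro sum.cong refl) (simp add: sym[symmetric] mult_ac)
    finally show ?thesis by (simp add: P_def)
  qed
  have "P y = (P y + P (-y)) / 2" using Pm by simp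
  also have "\<dots> = (\<Sum>t\<le>n. sg t * ((y^t + (-y)^t) / 2))"
    unfolding P_def gen by (simp add: sum.distrib[symmetric] sum_divide_distrib algebra_simps)
  also have "\<dots> = (\<Sum>t\<in>{t. t \<le> n \<and> even t}. sg t * y^t)"
  proof -
    have "(\<Sum>t\<le>n. sg t * ((y^t + (-y)^t) / 2)) = (\<Sum>t\<le>n. if even t then sg t * y^t else 0)"
      by (intro sum.cong) (auto simp: power_minus_odd)
    also have "\<dots> = (\<Sum>t\<in>{..n} \<inter> {t. even t}. sg t * y^t)"
      by (simp add: sum.inter_restrict)
    also have "{..n} \<inter> {t. even t} = {t. t \<le> n \<and> even t}" by auto
    finally show ?thesis .
  qed
  also have "\<dots> = (\<Sum>m\<le>n div 2. sg (2*m) * (y^2)^m)"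
  proof -
    have "{t. t \<le> n \<and> even t} = (\<lambda>m. 2*m) ` {..n div 2}"
      by (auto simp: image_def elim!: evenE)
    moreover have "inj_on (\<lambda>m::nat. 2*m) {..n div 2}" by (auto simp: inj_on_def)
    ultimately show ?thesis by (simp add: sum.reindex power_mult)
  qed
  finally show ?thesis by (simp add: P_def)
qed

lemma taylor1:
  fixes s :: "nat \<Rightarrow> real"
  shows "(\<Sum>m\<le>h. s m * z^m) = (\<Sum>i\<le>h. (\<Sum>m\<le>h. real (m choose i) * s m) * (z-1)^i)"
proof -
  have "(\<Sum>m\<le>h. s m * z^m) = (\<Sum>m\<le>h. s m * (\<Sum>i\<le>h. real (m choose i) * (z-1)^i))"
  proof (intro sum.cong refl)
    fix m assume m: "m \<in> {..h}"
    have "z^m = ((z-1) + 1)^m" by simp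
    also have "\<dots> = (\<Sum>i\<le>m. real (m choose i) * (z-1)^i)"
      unfolding binomial_ring by simp
    also have "\<dots> = (\<Sum>i\<le>h. real (m choose i) * (z-1)^i)"
      using m by (intro sum.mono_neutral_left) auto
    finally show "s m * z^m = s m * (\<Sum>i\<le>h. real (m choose i) * (z-1)^i)" by simp
  qed
  also have "\<dots> = (\<Sum>m\<le>h. \<Sum>i\<le>h. real (m choose i) * s m * (z-1)^i)"
    by (simp add: sum_distrib_left mult_ac)
  also have "\<dots> = (\<Sum>i\<le>h. \<Sum>m\<le>h. real (m choose i) * s m * (z-1)^i)"
    by (rule sum.swap)
  also have "\<dots> = (\<Sum>i\<le>h. (\<Sum>m\<le>h. real (m choose i) * s m) * (z-1)^i)"
    by (simp add: sum_distrib_right)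
  finally show ?thesis .
qed


lemma pointwise:
  fixes a rho :: "nat \<Rightarrow> real" and Q y :: real
  assumes rep: "\<And>t. (\<Sum>j\<le>n. a j * (1-t)^j * (1+t)^(n-j)) = (\<Sum>i\<le>h. rho i * (t^2 - 1)^i)"
    and h: "2*h \<le> n" and D: "1 - y + Q*y \<noteq> 0"
  shows "(\<Sum>j\<le>n. a j * Q^j * y^j * (1-y)^(n-j))
       = (\<Sum>i\<le>h. (rho i * (-4*Q)^i / 2^n) * (y*(1-y))^i * (1-y+Q*y)^(n-2*i))"
proof -
  define d where "d = 1 - y + Q*y"
  define t where "t = (1 - y - Q*y) / d"
  have d0: "d \<noteq> 0" using D by (simp add: d_def)
  have t1: "1 - t = 2*Q*y/d" using d0 by (simp add: t_def d_def field_simps)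
  have t2: "1 + t = 2*(1-y)/d" using d0 by (simp add: t_def d_def field_simps)
  have t3: "t^2 - 1 = (-4*Q*(y*(1-y))) / d^2"
  proof -
    have "t^2 - 1 = - ((1 - t) * (1 + t))" by (simp add: power2_eq_square algebra_simps)
    also have "\<dots> = (-4*Q*(y*(1-y))) / d^2" using d0 by (simp add: t1 t2 power2_eq_square field_simps)
    finally show ?thesis .
  qed
  have L: "(\<Sum>j\<le>n. a j * (1-t)^j * (1+t)^(n-j)) = (2/d)^n * (\<Sum>j\<le>n. a j * Q^j * y^j * (1-y)^(n-j))"
    unfolding sum_distrib_left
  proof (intro sum.cong refl)
    fix j assume "j \<in> {..n}"
    then have "(2/d)^n = (2/d)^j * (2/d)^(n-j)" by (simp flip: power_add)
    then show "a j * (1-t)^j * (1+t)^(n-j) = (2/d)^n * (a j * Q^j * y^j * (1-y)^(n-j))"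
      unfolding t1 t2 power_divide power_mult_distrib using d0 by (simp add: field_simps)
  qed
  have R: "(\<Sum>i\<le>h. rho i * (t^2 - 1)^i) = (2/d)^n * (\<Sum>i\<le>h. (rho i * (-4*Q)^i / 2^n) * (y*(1-y))^i * d^(n-2*i))"
    unfolding sum_distrib_left
  proof (intro sum.cong refl)
    fix i assume "i \<in> {..h}"
    then have "d^n = d^(n-2*i) * (d^2)^i" using h by (simp flip: power_add power_mult)
    then show "rho i * (t^2 - 1)^i = (2/d)^n * ((rho i * (-4*Q)^i / 2^n) * (y*(1-y))^i * d^(n-2*i))"
      unfolding t3 power_divide power_mult_distrib using d0 by (simp add: field_simps)
  qed
  have "(2/d)^n \<noteq> 0" using d0 by simp
  with rep[of t] L R D show ?thesis by (simp add: d_def)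
qed



lemma co1: "((1 - fps_X :: real fps)^m) $ l = (-1)^l * real (m choose l)"
proof (induction m arbitrary: l)
  case 0 then show ?case by (cases l) simp_all
next
  case (Suc m)
  show ?case
  proof (cases l)
    case 0 then show ?thesis by (simp add: fps_power_zeroth)
  next
    case (Suc l')
    have "((1 - fps_X :: real fps)^Suc m) $ l = ((1 - fps_X)^m - fps_X * (1 - fps_X)^m) $ l"
      by (simp add: algebra_simps)
    also have "\<dots> = (-1)^l * real (m choose l) - (-1)^l' * real (m choose l')"
      using Suc.IH Suc by simp
    also have "\<dots> = (-1)^l * real (Suc m choose l)" using Suc by (simp add: algebra_simps)
    finally show ?thesis .
  qed
qed

lemma co2: "(fps_X^j * (1 - fps_X :: real fps)^m) $ w = (if w < j then 0 else (-1)^(w-j) * real (m choose (w-j)))"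
  by (simp add: fps_X_power_mult_nth co1)

lemma nth1_mult: "((f::real fps) * g) $ 1 = f $ 0 * g $ 1 + f $ 1 * g $ 0"
  by (simp add: fps_mult_nth)

lemma nth1_power: "((f::real fps)^p) $ 1 = of_nat p * (f $ 0)^(p-1) * f $ 1"
proof (induction p)
  case 0 then show ?case by simp
next
  case (Suc p)
  show ?case
  proof (cases p)
    case 0 then show ?thesis by simp
  next
    case (Suc p')
    then show ?thesis using Suc.IH
      by (simp add: nth1_mult fps_power_zeroth algebra_simps)
  qed
qed

lemma kappa:
  fixes b :: real
  defines "G \<equiv> 1 + fps_const b * fps_X"
  shows "((fps_X * (1 - fps_X))^i * G^m) $ l =
     (if l < i then 0 else ((1 - fps_X)^i * G^m) $ (l - i))"
    and "((1 - fps_X)^i * G^m) $ 0 = 1"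
    and "((1 - fps_X)^i * G^m) $ 1 = real m * b - real i"
proof -
  show "((fps_X * (1 - fps_X))^i * G^m) $ l = (if l < i then 0 else ((1 - fps_X)^i * G^m) $ (l - i))"
    by (simp add: power_mult_distrib mult.assoc fps_X_power_mult_nth)
  show "((1 - fps_X)^i * G^m) $ 0 = 1" by (simp add: G_def fps_power_zeroth)
  show "((1 - fps_X)^i * G^m) $ 1 = real m * b - real i"
    by (simp only: nth1_mult nth1_power) (simp add: G_def fps_power_zeroth co1)
qed



lemma core:
  fixes q n k :: nat and a sg alf :: "nat \<Rightarrow> real"
  assumes q2: "q \<ge> 2" and ko: "odd k" and kn: "k + 2 \<le> n div 2"
    and alf_def: "\<And>i. alf i = - (real n * (real q - 1) / real i) *
     (\<Sum>j<i. (1 - real q) ^ j * real ((n - 2*i + j) choose (n - 2*i))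
                               * real ((2*i - 2 - j) choose (i - 1)))"
    and cc0: "(real (k+1) * (2 * real q - 1) - (real q - 1) * real n) \<ge> 0"
    and ineq: "(real (k+1) * (2 * real q - 1) - (real q - 1) * real n) * alf (k+1) < alf (k+2)"
    and sym: "\<And>j. j \<le> n \<Longrightarrow> a j = a (n - j)"
    and low: "\<And>j. j \<le> k \<Longrightarrow> a j = real (n choose j) / real q ^ j"
    and sgpos: "\<And>t. sg t \<ge> 0"
    and gen: "\<And>y. (\<Sum>j\<le>n. a j * (1-y)^j * (1+y)^(n-j)) = (\<Sum>t\<le>n. sg t * y^t)"
    and pauli: "(\<Sum>j\<le>k+2. a j * real q ^ j * (-1)^(k+2-j) * real ((n-j) choose (k+2-j))) \<ge> 0"
  shows False
proof -
  define h where "h = n div 2"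
  define Q where "Q = real q"
  define N where "N = k + 2"
  define cc where "cc = real (k+1) * (2 * real q - 1) - (real q - 1) * real n"
  have hn: "2*h \<le> n" by (simp add: h_def)
  have NH: "N \<le> h" using kn by (simp add: N_def h_def)
  have kn2: "k + 2 \<le> n" using kn by simp
  have Q2: "Q \<ge> 2" using q2 by (simp add: Q_def)
  define rho where "rho i = (\<Sum>m\<le>h. real (m choose i) * sg (2*m))" for i
  have rho0: "rho i \<ge> 0" for i unfolding rho_def by (intro sum_nonneg mult_nonneg_nonneg) (auto simp: sgpos)
  have rep: "(\<Sum>j\<le>n. a j * (1-t)^j * (1+t)^(n-j)) = (\<Sum>i\<le>h. rho i * (t^2 - 1)^i)" for t
    using even_rep[OF sym gen, of t] taylor1[where s="\<lambda>m. sg (2*m)" and h=h and z="t^2"]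
    unfolding h_def rho_def by simp
  define c where "c i = rho i * (-4*Q)^i / 2^n" for i
  define Apol where "Apol = (\<Sum>j\<le>n. smult (a j * Q^j) ([:0,1:]^j * [:1,-1:]^(n-j)))"
  define Cpol where "Cpol = (\<Sum>i\<le>h. smult (c i) ([:0,1,-1:]^i * [:1,Q-1:]^(n-2*i)))"
  have pw: "poly Apol y = poly Cpol y" if "1 - y + Q*y \<noteq> 0" for y
  proof -
    have "poly Apol y = (\<Sum>j\<le>n. a j * Q^j * y^j * (1-y)^(n-j))"
      by (simp add: Apol_def poly_sum mult_ac)
    also have "\<dots> = (\<Sum>i\<le>h. (rho i * (-4*Q)^i / 2^n) * (y*(1-y))^i * (1-y+Q*y)^(n-2*i))"
      by (rule pointwise[OF rep hn that])
    also have "\<dots> = poly Cpol y"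
      by (simp add: Cpol_def poly_sum c_def algebra_simps)
    finally show ?thesis .
  qed
  have AC: "Apol = Cpol"
  proof (rule ccontr)
    assume ne: "Apol \<noteq> Cpol"
    then have "finite {y. poly (Apol - Cpol) y = 0}" by (intro poly_roots_finite) simp
    moreover have "range real \<subseteq> {y. poly (Apol - Cpol) y = 0}"
    proof
      fix y assume "y \<in> range real"
      then obtain m where m: "y = real m" by auto
      have "1 - y + Q*y = 1 + (Q - 1) * y" by (simp add: algebra_simps)
      also have "\<dots> > 0" using Q2 m by (intro add_pos_nonneg mult_nonneg_nonneg) auto
      finally have "1 - y + Q*y \<noteq> 0" by simp
      then show "y \<in> {y. poly (Apol - Cpol) y = 0}" using pw by simp
    qed
    moreover have "infinite (range (real :: nat \<Rightarrow> real))"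
      by (intro range_inj_infinite) (simp add: inj_on_def)
    ultimately show False using finite_subset by blast
  qed
  define G where "G = 1 + fps_const (Q-1) * fps_X"
  have p1: "fps_of_poly [:1,-1:] = (1 - fps_X :: real fps)"
    by (simp add: fps_of_poly_pCons)
  have p2: "fps_of_poly [:0,1,-1:] = (fps_X * (1 - fps_X) :: real fps)"
    by (simp add: fps_of_poly_pCons algebra_simps)
  have p3: "fps_of_poly [:1,Q-1:] = G"
    by (simp add: fps_of_poly_pCons G_def algebra_simps)
  have fA: "fps_of_poly Apol = (\<Sum>j\<le>n. fps_const (a j * Q^j) * (fps_X^j * (1 - fps_X)^(n-j)))"
    unfolding Apol_def fps_of_poly_sum fps_of_poly_smult fps_of_poly_mult fps_of_poly_power p1
    by simp
  have fC: "fps_of_poly Cpol = (\<Sum>i\<le>h. fps_const (c i) * ((fps_X * (1 - fps_X))^i * G^(n-2*i)))"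
    unfolding Cpol_def fps_of_poly_sum fps_of_poly_smult fps_of_poly_mult fps_of_poly_power p2 p3
    by simp
  define kap where "kap i j = ((fps_X * (1 - fps_X))^i * G^(n-2*i)) $ j" for i j
  define A where "A w = fps_of_poly Apol $ w" for w
  have Asum: "A w = (\<Sum>j\<le>w. a j * Q^j * (-1)^(w-j) * real ((n-j) choose (w-j)))" if "w \<le> n" for w
  proof -
    have "A w = (\<Sum>j\<le>n. a j * Q^j * (if w < j then 0 else (-1)^(w-j) * real ((n-j) choose (w-j))))"
      unfolding A_def fA fps_sum_nth fps_mult_left_const_nth co2 ..
    also have "\<dots> = (\<Sum>j\<le>w. a j * Q^j * (if w < j then 0 else (-1)^(w-j) * real ((n-j) choose (w-j))))"
      using that by (intro sum.mono_neutral_right) auto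
    also have "\<dots> = (\<Sum>j\<le>w. a j * Q^j * (-1)^(w-j) * real ((n-j) choose (w-j)))"
      by (intro sum.cong) auto
    finally show ?thesis .
  qed
  have Apauli: "A (k+2) \<ge> 0" using pauli Asum[OF kn2] by (simp add: Q_def)
  have A0: "A 0 = 1" using Asum[of 0] low[of 0] by simp
  have Alow: "A w = 0" if w1: "1 \<le> w" and wk: "w \<le> k" for w
  proof -
    have wn: "w \<le> n" using wk kn2 by simp
    have "A w = (\<Sum>j\<le>w. real (n choose w) * ((-1)^w * ((-1)^j * real (w choose j))))"
    proof -
      have "A w = (\<Sum>j\<le>w. a j * Q^j * (-1)^(w-j) * real ((n-j) choose (w-j)))" by (rule Asum[OF wn])
      also have "\<dots> = (\<Sum>j\<le>w. real (n choose w) * ((-1)^w * ((-1)^j * real (w choose j))))"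
      proof (intro sum.cong refl)
        fix j assume j: "j \<in> {..w}"
        then have jk: "j \<le> k" using wk by simp
        have qj: "Q^j \<noteq> 0" using Q2 by simp
        have "a j * Q^j = real (n choose j)" using low[OF jk] qj by (simp add: Q_def)
        moreover have "real (n choose j) * real ((n-j) choose (w-j)) = real (n choose w) * real (w choose j)"
          using choose_mult[of j w n] j wn by (simp flip: of_nat_mult)
        moreover have "((-1::real)^(w-j)) = (-1)^w * (-1)^j"
        proof -
          have "((-1::real)^(w-j)) * (-1)^j = (-1)^w" using j by (simp flip: power_add)
          then show ?thesis by (metis mult.assoc mult_1_right neg_one_even_power even_add power_add)
        qed
        ultimately show "a j * Q^j * (-1)^(w-j) * real ((n-j) choose (w-j)) = real (n choose w) * ((-1)^w * ((-1)^j * real (w choose j)))"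
          by (simp add: mult_ac)
      qed
      finally show ?thesis .
    qed
    also have "\<dots> = real (n choose w) * ((-1)^w * (\<Sum>j\<le>w. (-1)^j * real (w choose j)))"
      by (simp add: sum_distrib_left)
    also have "(\<Sum>j\<le>w. (-1)^j * real (w choose j)) = (0::real)"
      using w1 by (intro choose_alternating_sum) simp
    finally show ?thesis by simp
  qed
  have Ck: "A j = (\<Sum>i\<le>h. c i * kap i j)" for j
    unfolding A_def AC fC fps_sum_nth fps_mult_left_const_nth kap_def ..
  define al where "al i = (if i = 0 then 1 else alf i)" for i
  have Tk: "(\<Sum>i\<le>N. al i * kap i j) = (if j = 0 then 1 else 0)" if "j \<le> N" for j
  proof -
    have "(\<Sum>i\<le>N. al i * kap i j) = (\<Sum>i\<le>N. fps_const (al i) * (fps_X * (1 - fps_X))^i * (1 + fps_const (Q - 1) * fps_X)^(n-2*i)) $ j"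
      unfolding fps_sum_nth kap_def G_def by (simp add: mult.assoc)
    also have "(\<Sum>i\<le>N. fps_const (al i) * (fps_X * (1 - fps_X))^i * (1 + fps_const (Q - 1) * fps_X)^(n-2*i))
      = (\<Sum>i\<le>N. fps_const (if i = 0 then 1 else - (real n * (Q - 1) / real i) *
         (\<Sum>l<i. (-(Q - 1))^l * real ((n - 2*i + l) choose (n-2*i)) * real ((2*i-2-l) choose (i-1)))) * (fps_X * (1 - fps_X))^i * (1 + fps_const (Q - 1) * fps_X)^(n-2*i))"
      by (intro sum.cong refl) (simp add: al_def alf_def Q_def)
    also have "\<dots> $ j = (if j = 0 then 1 else 0)"
      by (rule lagrange) (use that NH hn in auto)
    finally show ?thesis .
  qed
  define e where "e i = c i - al i" for i
  have klow: "kap i j = 0" if "j < i" for i j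
    using that unfolding kap_def G_def by (simp add: kappa(1))
  have kdiag: "kap i i = 1" for i
    unfolding kap_def G_def by (simp add: kappa(1) fps_power_zeroth)
  have k1: "kap i (Suc i) = real (n-2*i) * (Q-1) - real i" for i
  proof -
    have "kap i (Suc i) = ((1 - fps_X)^i * G^(n-2*i)) $ 1" unfolding kap_def G_def by (simp add: kappa(1))
    also have "\<dots> = real (n-2*i) * (Q-1) - real i" unfolding G_def by (rule kappa(3))
    finally show ?thesis .
  qed
  have key: "A j - (if j = 0 then 1 else 0) = (\<Sum>i\<le>j. e i * kap i j)" if jN: "j \<le> N" for j
  proof -
    have "A j = (\<Sum>i\<le>N. c i * kap i j)"
      unfolding Ck using NH jN by (intro sum.mono_neutral_right) (auto simp: klow)
    then have "A j - (if j = 0 then 1 else 0) = (\<Sum>i\<le>N. e i * kap i j)"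
      using Tk[OF jN] by (simp add: e_def sum_subtractf left_diff_distrib)
    also have "\<dots> = (\<Sum>i\<le>j. e i * kap i j)"
      using jN by (intro sum.mono_neutral_right) (auto simp: klow)
    finally show ?thesis .
  qed
  have split: "(\<Sum>i\<le>j. e i * kap i j) = (\<Sum>i<j. e i * kap i j) + e j" for j
    by (simp add: lessThan_Suc_atMost[symmetric] kdiag)
  have ez: "e j = 0" if "j \<le> k" for j
    using that
  proof (induction j rule: less_induct)
    case (less j)
    have "(\<Sum>i<j. e i * kap i j) = 0" using less by (intro sum.neutral) auto
    moreover have "A j - (if j = 0 then 1 else 0) = 0"
      using A0 Alow[of j] less.prems by (cases "j = 0") auto
    ultimately show ?case using key[of j] split[of j] less.prems by (simp add: N_def)
  qed
  have sk: "(\<Sum>i<k+1. e i * kap i j) = 0" for j using ez by (intro sum.neutral) auto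
  have e1: "A (k+1) = e (k+1)"
    using key[of "k+1"] split[of "k+1"] sk[of "k+1"] by (simp add: N_def)
  have e2: "A (k+2) = e (k+1) * kap (k+1) (k+2) + e (k+2)"
  proof -
    have "(\<Sum>i<k+2. e i * kap i (k+2)) = (\<Sum>i<k+1. e i * kap i (k+2)) + e (k+1) * kap (k+1) (k+2)"
      by simp
    then show ?thesis using key[of "k+2"] split[of "k+2"] sk[of "k+2"] by (simp add: N_def)
  qed
  have kk: "kap (k+1) (k+2) = - cc"
  proof -
    have "kap (k+1) (k+2) = real (n-2*(k+1)) * (Q-1) - real (k+1)" using k1[of "k+1"] by simp
    also have "real (n-2*(k+1)) = real n - 2 * real k - 2" using kn2 kn by (simp add: of_nat_diff)
    finally show ?thesis by (simp add: cc_def Q_def algebra_simps)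
  qed
  have m4: "(-4*Q) = -(4*Q)" by simp
  have c1: "c (k+1) \<ge> 0"
  proof -
    have "even (k+1)" using ko by simp
    then have eq: "(-4*Q)^(k+1) = (4*Q)^(k+1)" unfolding m4 by (rule power_minus_even)
    have pos: "(4*Q)^(k+1) \<ge> 0" using Q2 by simp
    have "(2::real)^n \<ge> 0" by simp
    then show ?thesis unfolding c_def eq
      by (rule divide_nonneg_nonneg[OF mult_nonneg_nonneg[OF rho0 pos]])
  qed
  have c2: "c (k+2) \<le> 0"
  proof -
    have "odd (k+2)" using ko by simp
    then have eq: "(-4*Q)^(k+2) = - ((4*Q)^(k+2))" unfolding m4 by (rule power_minus_odd)
    have pos: "(4*Q)^(k+2) \<ge> 0" using Q2 by simp
    have "rho (k+2) * (4*Q)^(k+2) \<ge> 0" by (rule mult_nonneg_nonneg[OF rho0 pos])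
    then have "rho (k+2) * (-4*Q)^(k+2) \<le> 0" unfolding eq by simp
    moreover have "(2::real)^n > 0" by simp
    ultimately show ?thesis unfolding c_def by (rule divide_nonpos_pos)
  qed
  have "A (k+2) = - (cc * c (k+1)) + cc * alf (k+1) + c (k+2) - alf (k+2)"
    using e2 kk by (simp add: e_def al_def algebra_simps)
  moreover have "cc * c (k+1) \<ge> 0" using cc0 c1 by (simp add: cc_def)
  moreover have "cc * alf (k+1) < alf (k+2)" using ineq by (simp add: cc_def)
  ultimately show False using Apauli c2 by linarith
qed


definition Zs :: "nat \<Rightarrow> nat \<Rightarrow> nat set \<Rightarrow> nat list set" where
  "Zs q n W = {z. length z = n \<and> (\<forall>i<n. z!i < q) \<and> (\<forall>i<n. i \<notin> W \<longrightarrow> z!i = 0)}"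

definition mixw :: "nat \<Rightarrow> nat set \<Rightarrow> nat list \<Rightarrow> nat list \<Rightarrow> nat list" where
  "mixw n K x y = map (\<lambda>i. if i \<in> K then x!i else y!i) [0..<n]"

lemma mixw_length [simp]: "length (mixw n K x y) = n"
  by (simp add: mixw_def)

lemma mixw_nth [simp]: "i < n \<Longrightarrow> mixw n K x y ! i = (if i \<in> K then x!i else y!i)"
  by (simp add: mixw_def)

lemma basis_Zs: "basis q n = Zs q n {..<n}"
  by (auto simp: basis_def Zs_def in_set_conv_nth subset_iff)

lemma in_basis: "x \<in> basis q n \<longleftrightarrow> length x = n \<and> (\<forall>i<n. x!i < q)"
  by (auto simp: basis_def in_set_conv_nth subset_iff)

lemma Zs_sub_basis: "Zs q n W \<subseteq> basis q n"
  by (auto simp: Zs_def in_basis)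

lemma finite_basis: "finite (basis q n)"
proof -
  have "basis q n \<subseteq> {xs. set xs \<subseteq> {..<q} \<and> length xs = n}" by (auto simp: basis_def)
  moreover have "finite {xs. set xs \<subseteq> {..<q} \<and> length xs = n}" by (rule finite_lists_length_eq) simp
  ultimately show ?thesis by (rule finite_subset)
qed

lemma finite_Zs: "finite (Zs q n W)"
  using finite_subset[OF Zs_sub_basis finite_basis] .

lemma mixw_in_Zs:
  assumes "x \<in> Zs q n Wa" "y \<in> Zs q n Wb"
  shows "mixw n K x y \<in> Zs q n ((Wa \<inter> K) \<union> (Wb - K))"
  using assms by (auto simp: Zs_def)

lemma mixw_basis: "x \<in> basis q n \<Longrightarrow> y \<in> basis q n \<Longrightarrow> mixw n K x y \<in> basis q n"
  by (auto simp: in_basis)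

lemma list_eqI: "length x = n \<Longrightarrow> length y = n \<Longrightarrow> (\<And>i. i < n \<Longrightarrow> x!i = y!i) \<Longrightarrow> x = y"
  by (metis nth_equalityI)

lemma card_Zs:
  assumes "W \<subseteq> {..<n}" and q0: "q > 0"
  shows "card (Zs q n W) = q ^ card W"
proof -
  define f where "f z = restrict (\<lambda>i. z!i) W" for z :: "nat list"
  have "bij_betw f (Zs q n W) (PiE W (\<lambda>_. {..<q}))"
  proof (rule bij_betw_byWitness[where f'="\<lambda>g. map (\<lambda>i. if i \<in> W then g i else 0) [0..<n]"])
    show "\<forall>z\<in>Zs q n W. map (\<lambda>i. if i \<in> W then f z i else 0) [0..<n] = z"
      by (auto simp: f_def Zs_def intro!: list_eqI[where n=n])
    show "\<forall>g\<in>PiE W (\<lambda>_. {..<q}). f (map (\<lambda>i. if i \<in> W then g i else 0) [0..<n]) = g"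
      using assms by (auto simp: f_def PiE_def extensional_def restrict_def fun_eq_iff)
    show "f ` Zs q n W \<subseteq> PiE W (\<lambda>_. {..<q})"
      using assms by (auto simp: f_def Zs_def)
    show "(\<lambda>g. map (\<lambda>i. if i \<in> W then g i else 0) [0..<n]) ` PiE W (\<lambda>_. {..<q}) \<subseteq> Zs q n W"
      using assms q0 by (auto simp: Zs_def PiE_def Pi_def)
  qed
  then have "card (Zs q n W) = card (PiE W (\<lambda>_. {..<q}))" by (rule bij_betw_same_card)
  also have "\<dots> = q ^ card W" using assms by (simp add: card_PiE finite_subset)
  finally show ?thesis .
qed

lemma Zs_split_bij:
  assumes "Wa \<inter> Wb = {}" and q0: "q > 0"
  shows "bij_betw (\<lambda>(u,v). mixw n Wa u v) (Zs q n Wa \<times> Zs q n Wb) (Zs q n (Wa \<union> Wb))"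
proof (rule bij_betw_byWitness[where f'="\<lambda>x. (mixw n Wa x (replicate n 0), mixw n Wa (replicate n 0) x)"])
  show "\<forall>a\<in>Zs q n Wa \<times> Zs q n Wb. (\<lambda>x. (mixw n Wa x (replicate n 0), mixw n Wa (replicate n 0) x)) ((\<lambda>(u,v). mixw n Wa u v) a) = a"
    using assms by (auto simp: Zs_def disjoint_iff intro!: list_eqI[where n=n])
  show "\<forall>x\<in>Zs q n (Wa \<union> Wb). (\<lambda>(u,v). mixw n Wa u v) ((\<lambda>x. (mixw n Wa x (replicate n 0), mixw n Wa (replicate n 0) x)) x) = x"
    by (auto simp: Zs_def intro!: list_eqI[where n=n])
  show "(\<lambda>(u,v). mixw n Wa u v) ` (Zs q n Wa \<times> Zs q n Wb) \<subseteq> Zs q n (Wa \<union> Wb)"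
    by (auto simp: Zs_def)
  show "(\<lambda>x. (mixw n Wa x (replicate n 0), mixw n Wa (replicate n 0) x)) ` Zs q n (Wa \<union> Wb) \<subseteq> Zs q n Wa \<times> Zs q n Wb"
    using assms q0 by (auto simp: Zs_def)
qed

lemma sum_Zs_split:
  assumes "Wa \<inter> Wb = {}" and q0: "q > 0"
  shows "(\<Sum>x\<in>Zs q n (Wa \<union> Wb). f x) = (\<Sum>u\<in>Zs q n Wa. \<Sum>v\<in>Zs q n Wb. f (mixw n Wa u v))"
proof -
  have "(\<Sum>x\<in>Zs q n (Wa \<union> Wb). f x) = (\<Sum>p\<in>Zs q n Wa \<times> Zs q n Wb. f ((\<lambda>(u,v). mixw n Wa u v) p))"
    using sum.reindex_bij_betw[OF Zs_split_bij[OF assms], of f] by simp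
  also have "\<dots> = (\<Sum>u\<in>Zs q n Wa. \<Sum>v\<in>Zs q n Wb. f (mixw n Wa u v))"
    by (simp add: sum.cartesian_product split_def)
  finally show ?thesis .
qed

lemma Zs_insert_bij:
  assumes "i \<notin> W" "i < n"
  shows "bij_betw (\<lambda>(c,z). z[i:=c]) ({..<q} \<times> Zs q n W) (Zs q n (insert i W))"
proof (rule bij_betw_byWitness[where f'="\<lambda>x. (x!i, x[i:=0])"])
  show "\<forall>a\<in>{..<q} \<times> Zs q n W. (\<lambda>x. (x!i, x[i:=0])) ((\<lambda>(c,z). z[i:=c]) a) = a"
    using assms by (auto simp: Zs_def nth_list_update intro!: list_eqI[where n=n])
  show "\<forall>x\<in>Zs q n (insert i W). (\<lambda>(c,z). z[i:=c]) ((\<lambda>x. (x!i, x[i:=0])) x) = x"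
    using assms by (auto simp: Zs_def)
  show "(\<lambda>(c,z). z[i:=c]) ` ({..<q} \<times> Zs q n W) \<subseteq> Zs q n (insert i W)"
    using assms by (auto simp: Zs_def nth_list_update)
  show "(\<lambda>x. (x!i, x[i:=0])) ` Zs q n (insert i W) \<subseteq> {..<q} \<times> Zs q n W"
    using assms by (auto simp: Zs_def nth_list_update)
qed

lemma sum_Zs_insert:
  assumes "i \<notin> W" "i < n"
  shows "(\<Sum>x\<in>Zs q n (insert i W). f x) = (\<Sum>c<q. \<Sum>z\<in>Zs q n W. f (z[i:=c]))"
proof -
  have "(\<Sum>x\<in>Zs q n (insert i W). f x) = (\<Sum>p\<in>{..<q} \<times> Zs q n W. f ((\<lambda>(c,z). z[i:=c]) p))"
    using sum.reindex_bij_betw[OF Zs_insert_bij[OF assms], of f] by simp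
  also have "\<dots> = (\<Sum>c<q. \<Sum>z\<in>Zs q n W. f (z[i:=c]))"
    by (simp add: sum.cartesian_product split_def)
  finally show ?thesis .
qed


definition rhoM :: "(nat list \<Rightarrow> complex) \<Rightarrow> nat list \<Rightarrow> nat list \<Rightarrow> complex" where
  "rhoM psi x y = psi x * cnj (psi y)"

definition red :: "nat \<Rightarrow> nat \<Rightarrow> nat set \<Rightarrow> (nat list \<Rightarrow> nat list \<Rightarrow> complex) \<Rightarrow> nat list \<Rightarrow> nat list \<Rightarrow> complex" where
  "red q n K M a b = (\<Sum>z\<in>Zs q n ({..<n} - K). M (mixw n K a z) (mixw n K b z))"

definition nrm :: "nat \<Rightarrow> nat \<Rightarrow> nat set \<Rightarrow> (nat list \<Rightarrow> nat list \<Rightarrow> complex) \<Rightarrow> real" where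
  "nrm q n K X = (\<Sum>a\<in>Zs q n K. \<Sum>b\<in>Zs q n K. (cmod (X a b))\<^sup>2)"

definition gK :: "nat \<Rightarrow> nat \<Rightarrow> (nat list \<Rightarrow> complex) \<Rightarrow> nat set \<Rightarrow> complex" where
  "gK q n psi K = (\<Sum>x\<in>basis q n. \<Sum>y\<in>basis q n.
      psi x * psi y * cnj (psi (mixw n K y x)) * cnj (psi (mixw n K x y)))"

lemma nrm_nonneg: "nrm q n K X \<ge> 0"
  unfolding nrm_def by (intro sum_nonneg) auto

lemma mixw_compl: "mixw n ({..<n} - K) y x = mixw n K x y"
  by (rule list_eqI[where n=n]) auto

lemma gK_compl: "gK q n psi ({..<n} - K) = gK q n psi K"
  unfolding gK_def mixw_compl by (intro sum.cong refl) (simp add: mult_ac)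

lemma Un_compl_n: "K \<subseteq> {..<n} \<Longrightarrow> K \<union> ({..<n} - K) = {..<n}" by auto

lemma sum_basis_split:
  assumes "K \<subseteq> {..<n}" "q > 0"
  shows "(\<Sum>x\<in>basis q n. f x) = (\<Sum>u\<in>Zs q n K. \<Sum>v\<in>Zs q n ({..<n} - K). f (mixw n K u v))"
  using sum_Zs_split[where Wa=K and Wb="{..<n} - K" and q=q and n=n and f=f] assms by (simp add: basis_Zs sup.absorb2)

lemma gK_nrm:
  assumes K: "K \<subseteq> {..<n}" and q0: "q > 0"
  shows "gK q n psi K = of_real (nrm q n K (red q n K (rhoM psi)))"
proof -
  define Zc where "Zc = Zs q n ({..<n} - K)"
  have m1: "mixw n K (mixw n K b z') (mixw n K a z) = mixw n K b z" for a b z z'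
    by (rule list_eqI[where n=n]) auto
  have m2: "mixw n K (mixw n K a z) (mixw n K b z') = mixw n K a z'" for a b z z'
    by (rule list_eqI[where n=n]) auto
  have "gK q n psi K = (\<Sum>a\<in>Zs q n K. \<Sum>z\<in>Zc. \<Sum>b\<in>Zs q n K. \<Sum>z'\<in>Zc.
      psi (mixw n K a z) * psi (mixw n K b z') * cnj (psi (mixw n K b z)) * cnj (psi (mixw n K a z')))"
    unfolding gK_def sum_basis_split[OF K q0] m1 m2 Zc_def ..
  also have "\<dots> = (\<Sum>a\<in>Zs q n K. \<Sum>b\<in>Zs q n K. \<Sum>z\<in>Zc. \<Sum>z'\<in>Zc.
      psi (mixw n K a z) * psi (mixw n K b z') * cnj (psi (mixw n K b z)) * cnj (psi (mixw n K a z')))"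
    by (rule sum.cong[OF refl]) (rule sum.swap)
  also have "\<dots> = (\<Sum>a\<in>Zs q n K. \<Sum>b\<in>Zs q n K. of_real ((cmod (red q n K (rhoM psi) a b))\<^sup>2))"
  proof (intro sum.cong refl)
    fix a b
    have "of_real ((cmod (red q n K (rhoM psi) a b))\<^sup>2) = red q n K (rhoM psi) a b * cnj (red q n K (rhoM psi) a b)"
      by (rule complex_norm_square)
    also have "\<dots> = (\<Sum>z\<in>Zc. \<Sum>z'\<in>Zc. psi (mixw n K a z) * psi (mixw n K b z') * cnj (psi (mixw n K b z)) * cnj (psi (mixw n K a z')))"
      unfolding red_def rhoM_def Zc_def[symmetric] cnj_sum sum_product
      by (intro sum.cong refl) (simp add: mult_ac)
    finally show "(\<Sum>z\<in>Zc. \<Sum>z'\<in>Zc. psi (mixw n K a z) * psi (mixw n K b z') * cnj (psi (mixw n K b z)) * cnj (psi (mixw n K a z')))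
        = of_real ((cmod (red q n K (rhoM psi) a b))\<^sup>2)" by simp
  qed
  also have "\<dots> = of_real (nrm q n K (red q n K (rhoM psi)))"
    by (simp add: nrm_def)
  finally show ?thesis .
qed

lemma reduced_red:
  assumes S: "S \<subseteq> {..<n}" and q0: "q > 0" and a: "a \<in> basis q n" and b: "b \<in> basis q n"
  shows "reduced q n psi S a b = red q n S (rhoM psi) a b"
proof -
  define Zc where "Zc = Zs q n ({..<n} - S)"
  define ua where "ua = mixw n S a (replicate n 0)"
  define vb where "vb = mixw n S b (replicate n 0)"
  have ua: "ua \<in> Zs q n S" "vb \<in> Zs q n S" using a b q0 by (auto simp: ua_def vb_def Zs_def in_basis)
  have cond: "((\<forall>i<n. i \<in> S \<longrightarrow> mixw n S u z ! i = a ! i \<and> mixw n S v z' ! i = b ! i) \<and>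
           (\<forall>i<n. i \<notin> S \<longrightarrow> mixw n S u z ! i = mixw n S v z' ! i))
        \<longleftrightarrow> (u = ua \<and> v = vb \<and> z' = z)"
    if "u \<in> Zs q n S" "v \<in> Zs q n S" "z \<in> Zc" "z' \<in> Zc" for u v z z'
  proof
    assume h: "(\<forall>i<n. i \<in> S \<longrightarrow> mixw n S u z ! i = a ! i \<and> mixw n S v z' ! i = b ! i) \<and>
           (\<forall>i<n. i \<notin> S \<longrightarrow> mixw n S u z ! i = mixw n S v z' ! i)"
    show "u = ua \<and> v = vb \<and> z' = z"
      using h that by (auto simp: ua_def vb_def Zc_def Zs_def intro!: list_eqI[where n=n])
  next
    assume "u = ua \<and> v = vb \<and> z' = z"
    then show "(\<forall>i<n. i \<in> S \<longrightarrow> mixw n S u z ! i = a ! i \<and> mixw n S v z' ! i = b ! i) \<and>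
           (\<forall>i<n. i \<notin> S \<longrightarrow> mixw n S u z ! i = mixw n S v z' ! i)"
      by (auto simp: ua_def vb_def)
  qed
  have "reduced q n psi S a b = (\<Sum>u\<in>Zs q n S. \<Sum>z\<in>Zc. \<Sum>v\<in>Zs q n S. \<Sum>z'\<in>Zc.
      if u = ua \<and> v = vb \<and> z' = z then psi (mixw n S u z) * cnj (psi (mixw n S v z')) else 0)"
    unfolding reduced_def sum_basis_split[OF S q0] Zc_def[symmetric]
    by (intro sum.cong refl, subst cond) (simp_all add: Zc_def)
  also have "\<dots> = (\<Sum>u\<in>Zs q n S. \<Sum>z\<in>Zc. if u = ua then psi (mixw n S u z) * cnj (psi (mixw n S vb z)) else 0)"
  proof (intro sum.cong refl)
    fix u z assume "z \<in> Zc"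
    have "(\<Sum>v\<in>Zs q n S. \<Sum>z'\<in>Zc. if u = ua \<and> v = vb \<and> z' = z then psi (mixw n S u z) * cnj (psi (mixw n S v z')) else 0)
       = (\<Sum>v\<in>Zs q n S. if v = vb then (if u = ua then psi (mixw n S u z) * cnj (psi (mixw n S v z)) else 0) else 0)"
      using \<open>z \<in> Zc\<close> by (intro sum.cong refl) (auto simp: finite_Zs Zc_def if_distrib cong: if_cong)
    also have "\<dots> = (if u = ua then psi (mixw n S u z) * cnj (psi (mixw n S vb z)) else 0)"
      using ua by (simp add: finite_Zs)
    finally show "(\<Sum>v\<in>Zs q n S. \<Sum>z'\<in>Zc. if u = ua \<and> v = vb \<and> z' = z then psi (mixw n S u z) * cnj (psi (mixw n S v z')) else 0)
       = (if u = ua then psi (mixw n S u z) * cnj (psi (mixw n S vb z)) else 0)" .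
  qed
  also have "\<dots> = (\<Sum>u\<in>Zs q n S. if u = ua then (\<Sum>z\<in>Zc. psi (mixw n S u z) * cnj (psi (mixw n S vb z))) else 0)"
    by (intro sum.cong refl) auto
  also have "\<dots> = (\<Sum>z\<in>Zc. psi (mixw n S ua z) * cnj (psi (mixw n S vb z)))"
    using ua by (simp add: finite_Zs)
  also have "\<dots> = red q n S (rhoM psi) a b"
  proof -
    have "mixw n S ua z = mixw n S a z" "mixw n S vb z = mixw n S b z" for z
      by (auto simp: ua_def vb_def intro!: list_eqI[where n=n])
    then show ?thesis by (simp add: red_def rhoM_def Zc_def)
  qed
  finally show ?thesis .
qed


lemma red_trace:
  assumes RS: "R \<subseteq> S" and S: "S \<subseteq> {..<n}" and q0: "q > 0"
  shows "red q n R M a b = (\<Sum>w\<in>Zs q n (S - R). red q n S M (mixw n (S-R) w a) (mixw n (S-R) w b))"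
proof -
  have U: "{..<n} - R = (S - R) \<union> ({..<n} - S)" using RS S by auto
  have D: "(S - R) \<inter> ({..<n} - S) = {}" by auto
  have e: "mixw n R c (mixw n (S - R) w z) = mixw n S (mixw n (S-R) w c) z" for c w z
    using RS by (auto intro!: list_eqI[where n=n])
  show ?thesis
    unfolding red_def U sum_Zs_split[OF D q0] e ..
qed

lemma red_low:
  assumes kuni: "k_uniform q n k psi" and q0: "q > 0" and R: "R \<subseteq> {..<n}" and Rk: "card R \<le> k" and kn: "k \<le> n"
    and a: "a \<in> basis q n" and b: "b \<in> basis q n"
  shows "red q n R (rhoM psi) a b = (if \<forall>i\<in>R. a!i = b!i then 1 / of_nat q ^ card R else 0)"
proof -
  obtain S where RS: "R \<subseteq> S" and S: "S \<subseteq> {..<n}" and cS: "card S = k"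
    using exists_subset_between[of R k "{..<n}"] Rk kn R by auto
  have finS: "finite S" using S finite_subset by blast
  have redS: "red q n S (rhoM psi) a' b' = (if \<forall>i\<in>S. a'!i = b'!i then 1 / of_nat (q ^ k) else 0)"
    if "a' \<in> basis q n" "b' \<in> basis q n" for a' b'
  proof -
    have "reduced q n psi S a' b' = (if \<forall>i\<in>S. a'!i = b'!i then 1 / of_nat (q ^ k) else 0)"
      using kuni S cS that unfolding k_uniform_def by blast
    then show ?thesis using reduced_red[OF S q0 that] by simp
  qed
  have mb: "mixw n (S-R) w c \<in> basis q n" if "w \<in> Zs q n (S-R)" "c \<in> basis q n" for w c
    using that Zs_sub_basis mixw_basis by blast
  have cond: "(\<forall>i\<in>S. mixw n (S-R) w a ! i = mixw n (S-R) w b ! i) = (\<forall>i\<in>R. a!i = b!i)" for w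
  proof
    assume h: "\<forall>i\<in>S. mixw n (S-R) w a ! i = mixw n (S-R) w b ! i"
    show "\<forall>i\<in>R. a!i = b!i"
    proof
      fix i assume i: "i \<in> R"
      then have "i \<in> S" "i < n" using RS S by auto
      then show "a!i = b!i" using h i by force
    qed
  next
    assume "\<forall>i\<in>R. a!i = b!i"
    then show "\<forall>i\<in>S. mixw n (S-R) w a ! i = mixw n (S-R) w b ! i" using S by auto
  qed
  have "red q n R (rhoM psi) a b = (\<Sum>w\<in>Zs q n (S - R). (if \<forall>i\<in>R. a!i = b!i then 1 / of_nat (q ^ k) else 0))"
    unfolding red_trace[OF RS S q0] using a b by (intro sum.cong refl) (simp add: redS mb cond)
  also have "\<dots> = of_nat (card (Zs q n (S - R))) * (if \<forall>i\<in>R. a!i = b!i then 1 / of_nat (q ^ k) else 0)"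
    by simp
  also have "card (Zs q n (S - R)) = q ^ (k - card R)"
    using card_Zs[of "S - R" n q] S q0 RS finS cS by (auto simp: card_Diff_subset finite_subset)
  also have "of_nat (q ^ (k - card R)) * (if \<forall>i\<in>R. a!i = b!i then 1 / of_nat (q ^ k) else 0)
      = (if \<forall>i\<in>R. a!i = b!i then 1 / of_nat q ^ card R else (0::complex))"
  proof -
    have "(of_nat q :: complex) ^ k = of_nat q ^ (k - card R) * of_nat q ^ card R"
      using Rk by (simp flip: power_add)
    then have "of_nat (q ^ (k - card R)) * (1 / of_nat (q ^ k)) = (1 / of_nat q ^ card R :: complex)"
      using q0 by (simp add: field_simps)
    then show ?thesis by simp
  qed
  finally show ?thesis .
qed

lemma gK_low:
  assumes kuni: "k_uniform q n k psi" and q0: "q > 0" and R: "R \<subseteq> {..<n}" and Rk: "card R \<le> k" and kn: "k \<le> n"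
  shows "gK q n psi R = 1 / of_nat q ^ card R"
proof -
  have "nrm q n R (red q n R (rhoM psi)) = (\<Sum>a\<in>Zs q n R. \<Sum>b\<in>Zs q n R. if a = b then (1 / real q ^ card R)\<^sup>2 else 0)"
    unfolding nrm_def
  proof (intro sum.cong refl)
    fix a b assume a: "a \<in> Zs q n R" and b: "b \<in> Zs q n R"
    have ab: "a \<in> basis q n" "b \<in> basis q n" using a b Zs_sub_basis by auto
    have "(\<forall>i\<in>R. a!i = b!i) = (a = b)"
      using a b R by (auto simp: Zs_def intro!: list_eqI[where n=n])
    then show "(cmod (red q n R (rhoM psi) a b))\<^sup>2 = (if a = b then (1 / real q ^ card R)\<^sup>2 else 0)"
      using red_low[OF kuni q0 R Rk kn ab] by (simp add: norm_divide norm_power)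
  qed
  also have "\<dots> = of_nat (card (Zs q n R)) * (1 / real q ^ card R)\<^sup>2"
    by (simp add: finite_Zs)
  also have "card (Zs q n R) = q ^ card R" by (rule card_Zs[OF R q0])
  also have "real (q ^ card R) * (1 / real q ^ card R)\<^sup>2 = 1 / real q ^ card R"
    using q0 by (simp add: power2_eq_square field_simps)
  finally show ?thesis using gK_nrm[OF R q0, of psi] by simp
qed


definition Ei :: "nat \<Rightarrow> nat \<Rightarrow> (nat list \<Rightarrow> nat list \<Rightarrow> complex) \<Rightarrow> nat list \<Rightarrow> nat list \<Rightarrow> complex" where
  "Ei q i X a b = (if a!i = b!i then (1 / of_nat q) * (\<Sum>c<q. X (a[i:=c]) (b[i:=c])) else 0)"

definition Di :: "nat \<Rightarrow> nat \<Rightarrow> (nat list \<Rightarrow> nat list \<Rightarrow> complex) \<Rightarrow> nat list \<Rightarrow> nat list \<Rightarrow> complex" where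
  "Di q i M a b = M a b - Ei q i M a b"

definition Nm :: "nat \<Rightarrow> nat \<Rightarrow> nat set \<Rightarrow> (nat list \<Rightarrow> nat list \<Rightarrow> complex) \<Rightarrow> real" where
  "Nm q n K M = nrm q n K (red q n K M)"

lemma mixw_upd:
  assumes "i \<in> K" "length a = n"
  shows "(mixw n K a z)[i:=c] = mixw n K (a[i:=c]) z"
proof (rule list_eqI[where n=n])
  fix j assume "j < n"
  then show "(mixw n K a z)[i:=c] ! j = mixw n K (a[i:=c]) z ! j"
    using assms by (cases "j = i") (auto simp: nth_list_update)
qed simp_all

lemma red_Di:
  assumes iK: "i \<in> K" and K: "K \<subseteq> {..<n}" and la: "length a = n" and lb: "length b = n"
  shows "red q n K (Di q i M) a b = red q n K M a b - Ei q i (red q n K M) a b"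
proof -
  have "i < n" using iK K by auto
  then have ai: "mixw n K a z ! i = a ! i" "mixw n K b z ! i = b ! i" for z using iK by auto
  have "red q n K (Ei q i M) a b = Ei q i (red q n K M) a b"
    unfolding red_def Ei_def ai mixw_upd[OF iK la] mixw_upd[OF iK lb]
    by (simp add: sum_distrib_left sum.swap[of _ "{..<q}"])
  then show ?thesis by (simp add: red_def Di_def sum_subtractf)
qed

lemma red_remove:
  assumes iK: "i \<in> K" and K: "K \<subseteq> {..<n}" and la: "length a = n" and lb: "length b = n"
  shows "(\<Sum>c<q. red q n K M (a[i:=c]) (b[i:=c])) = red q n (K - {i}) M a b"
proof -
  have i: "i < n" using iK K by auto
  have e: "{..<n} - (K - {i}) = insert i ({..<n} - K)" using i by auto
  have m: "mixw n (K - {i}) c (z[i:=d]) = mixw n K (c[i:=d]) z" if "length c = n" "length z = n" for c z d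
    using that i iK by (auto simp: nth_list_update intro!: list_eqI[where n=n])
  have lz: "z \<in> Zs q n W \<Longrightarrow> length z = n" for z W by (simp add: Zs_def)
  have iW: "i \<notin> {..<n} - K" using iK by auto
  have "red q n (K - {i}) M a b = (\<Sum>c<q. \<Sum>z\<in>Zs q n ({..<n} - K). M (mixw n (K - {i}) a (z[i:=c])) (mixw n (K - {i}) b (z[i:=c])))"
    unfolding red_def e by (rule sum_Zs_insert[OF iW i])
  then show ?thesis
    using la lb by (simp add: red_def m lz)
qed

lemma nrm_cong: "(\<And>a b. a \<in> Zs q n K \<Longrightarrow> b \<in> Zs q n K \<Longrightarrow> X a b = Y a b) \<Longrightarrow> nrm q n K X = nrm q n K Y"
  unfolding nrm_def by (intro sum.cong refl) auto

lemma variance: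
  fixes x :: "nat \<Rightarrow> complex"
  assumes q0: "q > 0"
  shows "(\<Sum>c<q. (x c - (\<Sum>d<q. x d) / of_nat q) * cnj (x c - (\<Sum>d<q. x d) / of_nat q))
       = (\<Sum>c<q. x c * cnj (x c)) - (\<Sum>d<q. x d) * cnj (\<Sum>d<q. x d) / of_nat q"
proof -
  define t where "t = (\<Sum>d<q. x d)"
  define m where "m = t / of_nat q"
  have "(\<Sum>c<q. (x c - m) * cnj (x c - m)) = (\<Sum>c<q. x c * cnj (x c) - (cnj m * x c + m * cnj (x c)) + m * cnj m)"
    by (intro sum.cong refl) (simp add: algebra_simps)
  also have "\<dots> = (\<Sum>c<q. x c * cnj (x c)) - (cnj m * t + m * cnj t) + of_nat q * (m * cnj m)"
    by (simp add: sum.distrib sum_subtractf sum_distrib_left t_def cnj_sum)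
  also have "(cnj m * t + m * cnj t) = 2 * (t * cnj t) / of_nat q" using q0 by (simp add: m_def field_simps)
  also have "of_nat q * (m * cnj m) = t * cnj t / of_nat q" using q0 by (simp add: m_def field_simps power2_eq_square)
  finally show ?thesis unfolding m_def t_def[symmetric] by (simp add: field_simps)
qed

lemma nrm_insert:
  assumes i: "i \<notin> K0" "i < n"
  shows "nrm q n (insert i K0) Y = (\<Sum>a\<in>Zs q n K0. \<Sum>b\<in>Zs q n K0. \<Sum>c<q. \<Sum>c'<q. (cmod (Y (a[i:=c]) (b[i:=c'])))\<^sup>2)"
proof -
  have "nrm q n (insert i K0) Y = (\<Sum>c<q. \<Sum>a\<in>Zs q n K0. \<Sum>c'<q. \<Sum>b\<in>Zs q n K0. (cmod (Y (a[i:=c]) (b[i:=c'])))\<^sup>2)"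
    unfolding nrm_def sum_Zs_insert[OF i] ..
  also have "\<dots> = (\<Sum>a\<in>Zs q n K0. \<Sum>c<q. \<Sum>b\<in>Zs q n K0. \<Sum>c'<q. (cmod (Y (a[i:=c]) (b[i:=c'])))\<^sup>2)"
    by (subst sum.swap) (intro sum.cong refl, rule sum.swap)
  also have "\<dots> = (\<Sum>a\<in>Zs q n K0. \<Sum>b\<in>Zs q n K0. \<Sum>c<q. \<Sum>c'<q. (cmod (Y (a[i:=c]) (b[i:=c'])))\<^sup>2)"
    by (intro sum.cong refl) (rule sum.swap)
  finally show ?thesis .
qed

lemma Nm_Di:
  assumes iK: "i \<in> K" and K: "K \<subseteq> {..<n}" and q0: "q > 0"
  shows "Nm q n K (Di q i M) = Nm q n K M - Nm q n (K - {i}) M / real q"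
proof -
  define K0 where "K0 = K - {i}"
  have i: "i \<notin> K0" "i < n" using iK K by (auto simp: K0_def)
  have KK: "K = insert i K0" using iK by (auto simp: K0_def)
  define X where "X = red q n K M"
  have lz: "z \<in> Zs q n W \<Longrightarrow> length z = n" for z W by (simp add: Zs_def)
  have "Nm q n K (Di q i M) = nrm q n K (\<lambda>a b. X a b - Ei q i X a b)"
    unfolding Nm_def X_def by (rule nrm_cong) (simp add: red_Di[OF iK K] lz)
  also have "\<dots> = (\<Sum>a\<in>Zs q n K0. \<Sum>b\<in>Zs q n K0. \<Sum>c<q. \<Sum>c'<q.
        (cmod (X (a[i:=c]) (b[i:=c']) - (if c = c' then (\<Sum>d<q. X (a[i:=d]) (b[i:=d])) / of_nat q else 0)))\<^sup>2)"
    unfolding KK nrm_insert[OF i]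
    using i by (intro sum.cong refl) (simp add: Ei_def lz)
  also have "\<dots> = (\<Sum>a\<in>Zs q n K0. \<Sum>b\<in>Zs q n K0. (\<Sum>c<q. \<Sum>c'<q. (cmod (X (a[i:=c]) (b[i:=c'])))\<^sup>2)
        - (cmod (\<Sum>d<q. X (a[i:=d]) (b[i:=d])))\<^sup>2 / real q)"
  proof (intro sum.cong refl)
    fix a b
    define x where "x c c' = X (a[i:=c]) (b[i:=c'])" for c c'
    define t where "t = (\<Sum>d<q. x d d)"
    have off: "(\<Sum>c<q. \<Sum>c'<q. (cmod (x c c' - (if c = c' then t / of_nat q else 0)))\<^sup>2)
       = (\<Sum>c<q. \<Sum>c'<q. (cmod (x c c'))\<^sup>2) - (\<Sum>c<q. (cmod (x c c))\<^sup>2) + (\<Sum>c<q. (cmod (x c c - t / of_nat q))\<^sup>2)"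
    proof -
      have "(\<Sum>c'<q. (cmod (x c c' - (if c = c' then t / of_nat q else 0)))\<^sup>2)
          = (\<Sum>c'<q. (cmod (x c c'))\<^sup>2) - (cmod (x c c))\<^sup>2 + (cmod (x c c - t / of_nat q))\<^sup>2"
        if "c < q" for c
      proof -
        have "(\<Sum>c'<q. (cmod (x c c' - (if c = c' then t / of_nat q else 0)))\<^sup>2)
            = (\<Sum>c'<q. (cmod (x c c'))\<^sup>2 + (if c' = c then (cmod (x c c - t / of_nat q))\<^sup>2 - (cmod (x c c))\<^sup>2 else 0))"
          by (intro sum.cong refl) auto
        also have "\<dots> = (\<Sum>c'<q. (cmod (x c c'))\<^sup>2) + ((cmod (x c c - t / of_nat q))\<^sup>2 - (cmod (x c c))\<^sup>2)"
          using that by (simp add: sum.distrib)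
        finally show ?thesis by simp
      qed
      then show ?thesis by (simp add: sum.distrib sum_subtractf)
    qed
    have var: "(\<Sum>c<q. (cmod (x c c - t / of_nat q))\<^sup>2) = (\<Sum>c<q. (cmod (x c c))\<^sup>2) - (cmod t)\<^sup>2 / real q"
    proof -
      have "complex_of_real (\<Sum>c<q. (cmod (x c c - t / of_nat q))\<^sup>2)
          = (\<Sum>c<q. (x c c - t / of_nat q) * cnj (x c c - t / of_nat q))"
        unfolding of_real_sum by (intro sum.cong refl) (rule complex_norm_square)
      also have "\<dots> = (\<Sum>c<q. x c c * cnj (x c c)) - t * cnj t / of_nat q"
        unfolding t_def by (rule variance[OF q0])
      also have "\<dots> = complex_of_real ((\<Sum>c<q. (cmod (x c c))\<^sup>2) - (cmod t)\<^sup>2 / real q)"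
        by (simp only: of_real_diff of_real_sum of_real_divide complex_norm_square of_real_of_nat_eq)
      finally show ?thesis by (simp only: of_real_eq_iff)
    qed
    show "(\<Sum>c<q. \<Sum>c'<q. (cmod (X (a[i:=c]) (b[i:=c']) - (if c = c' then (\<Sum>d<q. X (a[i:=d]) (b[i:=d])) / of_nat q else 0)))\<^sup>2)
        = (\<Sum>c<q. \<Sum>c'<q. (cmod (X (a[i:=c]) (b[i:=c'])))\<^sup>2) - (cmod (\<Sum>d<q. X (a[i:=d]) (b[i:=d])))\<^sup>2 / real q"
      using off var unfolding x_def t_def by simp
  qed
  also have "\<dots> = nrm q n K X - nrm q n K0 (red q n K0 M) / real q"
  proof -
    have "nrm q n K X = (\<Sum>a\<in>Zs q n K0. \<Sum>b\<in>Zs q n K0. \<Sum>c<q. \<Sum>c'<q. (cmod (X (a[i:=c]) (b[i:=c'])))\<^sup>2)"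
      unfolding KK by (rule nrm_insert[OF i])
    moreover have "nrm q n K0 (red q n K0 M) = (\<Sum>a\<in>Zs q n K0. \<Sum>b\<in>Zs q n K0. (cmod (\<Sum>d<q. X (a[i:=d]) (b[i:=d])))\<^sup>2)"
      unfolding nrm_def X_def K0_def using red_remove[OF iK K] lz by (intro sum.cong refl) simp
    ultimately show ?thesis by (simp add: sum_subtractf sum_divide_distrib)
  qed
  finally show ?thesis by (simp add: Nm_def X_def K0_def)
qed


lemma sum_Pow_insert:
  assumes "finite S" "i \<notin> S"
  shows "(\<Sum>U\<in>Pow (insert i S). f U) = (\<Sum>U\<in>Pow S. f U) + (\<Sum>U\<in>Pow S. f (insert i U))"
proof -
  have d: "Pow S \<inter> insert i ` Pow S = {}" using assms by auto
  have inj: "inj_on (insert i) (Pow S)"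
    using assms unfolding inj_on_def by (metis PowD insert_absorb insert_ident subsetD)
  have "(\<Sum>U\<in>Pow (insert i S). f U) = (\<Sum>U\<in>Pow S. f U) + (\<Sum>U\<in>insert i ` Pow S. f U)"
    unfolding Pow_insert using assms d by (intro sum.union_disjoint) auto
  also have "(\<Sum>U\<in>insert i ` Pow S. f U) = (\<Sum>U\<in>Pow S. f (insert i U))"
    using inj by (simp add: sum.reindex)
  finally show ?thesis .
qed

lemma pauli_ind:
  assumes fin: "finite S0" and q0: "q > 0"
  shows "V \<union> S0 \<subseteq> {..<n} \<Longrightarrow> V \<inter> S0 = {} \<Longrightarrow>
    0 \<le> (\<Sum>U\<in>Pow S0. (-1)^card U / real q ^ card U * Nm q n ((V \<union> S0) - U) M)"
  using fin
proof (induction S0 arbitrary: V M rule: finite_induct)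
  case empty
  then show ?case by (simp add: Nm_def nrm_nonneg)
next
  case (insert i S)
  define K where "K U = (V \<union> insert i S) - U" for U
  have iS: "i \<notin> S" by fact
  have "(\<Sum>U\<in>Pow (insert i S). (-1)^card U / real q ^ card U * Nm q n ((V \<union> insert i S) - U) M)
      = (\<Sum>U\<in>Pow S. (-1)^card U / real q ^ card U * Nm q n (K U) M)
        + (\<Sum>U\<in>Pow S. (-1)^card (insert i U) / real q ^ card (insert i U) * Nm q n (K (insert i U)) M)"
    unfolding K_def by (rule sum_Pow_insert[OF insert(1) iS])
  also have "\<dots> = (\<Sum>U\<in>Pow S. (-1)^card U / real q ^ card U * (Nm q n (K U) M - Nm q n (K U - {i}) M / real q))"
  proof -
    have "(\<Sum>U\<in>Pow S. (-1)^card (insert i U) / real q ^ card (insert i U) * Nm q n (K (insert i U)) M)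
        = (\<Sum>U\<in>Pow S. - ((-1)^card U / real q ^ card U * (Nm q n (K U - {i}) M / real q)))"
    proof (intro sum.cong refl)
      fix U assume "U \<in> Pow S"
      then have U: "U \<subseteq> S" "finite U" "i \<notin> U" using insert(1) iS finite_subset by auto
      then have "card (insert i U) = Suc (card U)" by simp
      moreover have "K (insert i U) = K U - {i}" by (auto simp: K_def)
      ultimately show "(-1)^card (insert i U) / real q ^ card (insert i U) * Nm q n (K (insert i U)) M
          = - ((-1)^card U / real q ^ card U * (Nm q n (K U - {i}) M / real q))"
        by (simp add: field_simps)
    qed
    then show ?thesis by (simp add: sum.distrib[symmetric] sum_negf[symmetric] algebra_simps)
  qed
  also have "\<dots> = (\<Sum>U\<in>Pow S. (-1)^card U / real q ^ card U * Nm q n ((insert i V \<union> S) - U) (Di q i M))"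
  proof (intro sum.cong refl)
    fix U assume "U \<in> Pow S"
    then have iK: "i \<in> K U" using iS by (auto simp: K_def)
    have Kn: "K U \<subseteq> {..<n}" using insert.prems by (auto simp: K_def)
    have "K U = (insert i V \<union> S) - U" by (auto simp: K_def)
    then show "(-1)^card U / real q ^ card U * (Nm q n (K U) M - Nm q n (K U - {i}) M / real q)
        = (-1)^card U / real q ^ card U * Nm q n ((insert i V \<union> S) - U) (Di q i M)"
      using Nm_Di[OF iK Kn q0, of M] by simp
  qed
  also have "0 \<le> \<dots>"
    using insert.prems iS by (intro insert.IH) auto
  finally show ?case by simp
qed

lemma pauli_pos:
  assumes S: "S \<subseteq> {..<n}" and q0: "q > 0"
  shows "0 \<le> (\<Sum>R\<in>Pow S. (-1)^card (S - R) * real q ^ card R * Nm q n R M)"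
proof -
  have fin: "finite S" using S finite_subset by blast
  have "0 \<le> (\<Sum>U\<in>Pow S. (-1)^card U / real q ^ card U * Nm q n (({} \<union> S) - U) M)"
    using pauli_ind[OF fin q0, of "{}"] S by auto
  then have "0 \<le> real q ^ card S * (\<Sum>U\<in>Pow S. (-1)^card U / real q ^ card U * Nm q n (S - U) M)"
    by simp
  also have "\<dots> = (\<Sum>U\<in>Pow S. (-1)^card U * real q ^ (card S - card U) * Nm q n (S - U) M)"
    unfolding sum_distrib_left
  proof (intro sum.cong refl)
    fix U assume "U \<in> Pow S"
    then have "card U \<le> card S" using fin by (simp add: card_mono)
    then have "real q ^ card S = real q ^ (card S - card U) * real q ^ card U" by (simp flip: power_add)
    then show "real q ^ card S * ((-1)^card U / real q ^ card U * Nm q n (S - U) M)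
        = (-1)^card U * real q ^ (card S - card U) * Nm q n (S - U) M" using q0 by (simp add: field_simps)
  qed
  also have "\<dots> = (\<Sum>R\<in>Pow S. (-1)^card (S - R) * real q ^ card R * Nm q n R M)"
  proof (rule sum.reindex_bij_witness[where i="\<lambda>U. S - U" and j="\<lambda>U. S - U"])
    fix U assume "U \<in> Pow S"
    then have US: "U \<subseteq> S" by simp
    have "card (S - U) = card S - card U" using US fin by (simp add: card_Diff_subset finite_subset)
    moreover have "S - (S - U) = U" using US by auto
    ultimately show "(-1)^card (S - (S - U)) * real q ^ card (S - U) * Nm q n (S - U) M
        = (-1)^card U * real q ^ (card S - card U) * Nm q n (S - U) M" by simp
  qed auto
  finally show ?thesis .
qed


definition sdiff :: "'a set \<Rightarrow> 'a set \<Rightarrow> 'a set" where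
  "sdiff A B = (A - B) \<union> (B - A)"

definition swp :: "nat \<Rightarrow> nat set \<Rightarrow> nat list \<times> nat list \<Rightarrow> nat list \<times> nat list" where
  "swp n K p = (mixw n K (snd p) (fst p), mixw n K (fst p) (snd p))"

lemma swp_swp: "swp n K (swp n K' p) = swp n (sdiff K K') p"
  unfolding swp_def sdiff_def by (auto intro!: list_eqI[where n=n])

lemma swp_empty: "p \<in> basis q n \<times> basis q n \<Longrightarrow> swp n {} p = p"
  unfolding swp_def by (cases p) (auto simp: in_basis intro!: list_eqI[where n=n])

lemma swp_basis: "p \<in> basis q n \<times> basis q n \<Longrightarrow> swp n K p \<in> basis q n \<times> basis q n"
  unfolding swp_def by (cases p) (auto intro: mixw_basis)

lemma sdiff_self: "sdiff K K = {}" by (auto simp: sdiff_def)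
lemma sdiff_comm: "sdiff A B = sdiff B A" by (auto simp: sdiff_def)

lemma swp_bij: "bij_betw (swp n K) (basis q n \<times> basis q n) (basis q n \<times> basis q n)"
proof (rule bij_betw_byWitness[where f'="swp n K"])
  show "\<forall>a\<in>basis q n \<times> basis q n. swp n K (swp n K a) = a"
    by (auto simp: swp_swp sdiff_self swp_empty)
  then show "\<forall>a\<in>basis q n \<times> basis q n. swp n K (swp n K a) = a" .
  show "swp n K ` (basis q n \<times> basis q n) \<subseteq> basis q n \<times> basis q n"
    using swp_basis by blast
  then show "swp n K ` (basis q n \<times> basis q n) \<subseteq> basis q n \<times> basis q n" .
qed

definition Phi :: "(nat list \<Rightarrow> complex) \<Rightarrow> nat list \<times> nat list \<Rightarrow> complex" where
  "Phi psi p = psi (fst p) * psi (snd p)"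

lemma gK_Phi: "gK q n psi K = (\<Sum>p\<in>basis q n \<times> basis q n. Phi psi p * cnj (Phi psi (swp n K p)))"
  unfolding gK_def Phi_def swp_def sum.cartesian_product by (intro sum.cong refl) (auto simp: mult_ac)

lemma inner_swp:
  "(\<Sum>p\<in>basis q n \<times> basis q n. Phi psi (swp n S p) * cnj (Phi psi (swp n S' p))) = gK q n psi (sdiff S S')"
proof -
  have "(\<Sum>p\<in>basis q n \<times> basis q n. Phi psi (swp n S p) * cnj (Phi psi (swp n S' p)))
      = (\<Sum>p\<in>basis q n \<times> basis q n. Phi psi (swp n S (swp n S p)) * cnj (Phi psi (swp n S' (swp n S p))))"
    using sum.reindex_bij_betw[OF swp_bij[of n S q], of "\<lambda>p. Phi psi (swp n S p) * cnj (Phi psi (swp n S' p))"]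
    by simp
  also have "\<dots> = (\<Sum>p\<in>basis q n \<times> basis q n. Phi psi p * cnj (Phi psi (swp n (sdiff S S') p)))"
    by (intro sum.cong refl) (simp add: swp_swp sdiff_self swp_empty sdiff_comm)
  finally show ?thesis by (simp add: gK_Phi)
qed

lemma parity_sdiff:
  assumes "finite A" "finite B"
  shows "(-1::complex)^card A * (-1)^card B = (-1)^card (sdiff A B)"
proof -
  have a: "card A = card (A - B) + card (A \<inter> B)"
  proof -
    have "A = (A - B) \<union> (A \<inter> B)" by auto
    then have "card A = card ((A - B) \<union> (A \<inter> B))" by simp
    also have "\<dots> = card (A - B) + card (A \<inter> B)" using assms by (intro card_Un_disjoint) auto
    finally show ?thesis .
  qed
  have b: "card B = card (B - A) + card (A \<inter> B)"
  proof -
    have "B = (B - A) \<union> (A \<inter> B)" by auto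
    then have "card B = card ((B - A) \<union> (A \<inter> B))" by simp
    also have "\<dots> = card (B - A) + card (A \<inter> B)" using assms by (intro card_Un_disjoint) auto
    finally show ?thesis .
  qed
  have c: "card (sdiff A B) = card (A - B) + card (B - A)"
    unfolding sdiff_def using assms by (intro card_Un_disjoint) auto
  have "(-1::complex)^card A * (-1)^card B = (-1)^(card (A - B) + card (B - A)) * ((-1)^card (A \<inter> B))^2"
    unfolding a b by (simp add: power_add power2_eq_square mult_ac)
  also have "((-1::complex)^card (A \<inter> B))^2 = 1" by (simp flip: power_mult)
  finally show ?thesis using c by simp
qed

lemma shadow_pos:
  assumes T: "T \<subseteq> {..<n}"
  shows "0 \<le> Re (\<Sum>U\<in>Pow {..<n}. (-1)^card (U \<inter> T) * gK q n psi U)"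
proof -
  define P where "P = Pow {..<n::nat}"
  define B2 where "B2 = basis q n \<times> basis q n"
  define eps where "eps S = (-1::complex)^card (S \<inter> T)" for S
  define G where "G p = (\<Sum>S\<in>P. eps S * Phi psi (swp n S p))" for p
  have finP: "finite P" by (simp add: P_def)
  have epsm: "eps S * eps S' = eps (sdiff S S')" if "S \<in> P" "S' \<in> P" for S S'
  proof -
    have "sdiff (S \<inter> T) (S' \<inter> T) = sdiff S S' \<inter> T" by (auto simp: sdiff_def)
    moreover have "finite (S \<inter> T)" "finite (S' \<inter> T)" using that by (auto simp: P_def finite_subset)
    ultimately show ?thesis unfolding eps_def by (metis parity_sdiff)
  qed
  have "(\<Sum>p\<in>B2. G p * cnj (G p)) = (\<Sum>S\<in>P. \<Sum>S'\<in>P. eps S * eps S' * gK q n psi (sdiff S S'))"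
  proof -
    have "(\<Sum>p\<in>B2. G p * cnj (G p)) = (\<Sum>p\<in>B2. \<Sum>S\<in>P. \<Sum>S'\<in>P. eps S * eps S' * (Phi psi (swp n S p) * cnj (Phi psi (swp n S' p))))"
      unfolding G_def cnj_sum sum_product by (intro sum.cong refl) (simp add: eps_def mult_ac)
    also have "\<dots> = (\<Sum>S\<in>P. \<Sum>S'\<in>P. eps S * eps S' * (\<Sum>p\<in>B2. Phi psi (swp n S p) * cnj (Phi psi (swp n S' p))))"
      by (simp add: sum_distrib_left sum.swap[of _ B2])
    finally show ?thesis unfolding B2_def inner_swp .
  qed
  also have "\<dots> = (\<Sum>S\<in>P. \<Sum>U\<in>P. eps U * gK q n psi U)"
  proof (rule sum.cong[OF refl])
    fix S assume S: "S \<in> P"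
    have "(\<Sum>S'\<in>P. eps S * eps S' * gK q n psi (sdiff S S')) = (\<Sum>S'\<in>P. eps (sdiff S S') * gK q n psi (sdiff S S'))"
      using S epsm by (intro sum.cong refl) auto
    also have "\<dots> = (\<Sum>U\<in>P. eps U * gK q n psi U)"
    proof (rule sum.reindex_bij_witness[where i="sdiff S" and j="sdiff S"])
      fix U assume "U \<in> P"
      then show "sdiff S (sdiff S U) = U" "sdiff S U \<in> P" using S by (auto simp: sdiff_def P_def)
    next
      fix U assume "U \<in> P"
      then show "sdiff S (sdiff S U) = U" "sdiff S U \<in> P" using S by (auto simp: sdiff_def P_def)
    qed simp
    finally show "(\<Sum>S'\<in>P. eps S * eps S' * gK q n psi (sdiff S S')) = (\<Sum>U\<in>P. eps U * gK q n psi U)" .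
  qed
  also have "\<dots> = of_nat (card P) * (\<Sum>U\<in>P. eps U * gK q n psi U)" by simp
  finally have eq: "(\<Sum>p\<in>B2. G p * cnj (G p)) = of_nat (card P) * (\<Sum>U\<in>P. eps U * gK q n psi U)" .
  have "0 \<le> Re (\<Sum>p\<in>B2. G p * cnj (G p))"
    by (simp add: sum_nonneg complex_mult_cnj power2_eq_square)
  then have "0 \<le> real (card P) * Re (\<Sum>U\<in>P. eps U * gK q n psi U)"
    unfolding eq by (simp add: Re_sum)
  moreover have "card P > 0" using finP by (auto simp: P_def card_gt_0_iff)
  ultimately have "0 \<le> Re (\<Sum>U\<in>P. eps U * gK q n psi U)"
    using zero_le_mult_iff by (metis of_nat_0_less_iff not_less)
  then show ?thesis by (simp only: P_def eps_def)
qed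


lemma sum_by_card:
  fixes f :: "nat set \<Rightarrow> real"
  shows "(\<Sum>U\<in>Pow {..<n}. f U) = (\<Sum>j\<le>n. \<Sum>U\<in>{U. U \<subseteq> {..<n} \<and> card U = j}. f U)"
proof -
  have "(\<Sum>j\<le>n. \<Sum>U\<in>{U. U \<in> Pow {..<n} \<and> card U = j}. f U) = (\<Sum>U\<in>Pow {..<n}. f U)"
  proof (rule sum.group)
    show "card ` Pow {..<n} \<subseteq> {..n}" by (auto simp: card_mono[of "{..<n}", simplified])
  qed auto
  then show ?thesis by simp
qed

lemma gen_fun_sets:
  fixes y :: real
  assumes U: "U \<subseteq> {..<n}"
  shows "(\<Sum>T\<in>Pow {..<n}. (-1)^card (U \<inter> T) * y^card T) = (1-y)^card U * (1+y)^(n - card U)"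
proof -
  define w where "w i = (if i \<in> U then -y else y)" for i
  have finU: "finite U" using U finite_subset by blast
  have "(\<Prod>i\<in>{..<n}. w i + 1) = (\<Sum>T\<in>Pow {..<n}. (\<Prod>i\<in>T. w i) * (\<Prod>i\<in>{..<n}-T. 1))"
    by (rule prod_add) simp
  also have "\<dots> = (\<Sum>T\<in>Pow {..<n}. (-1)^card (U \<inter> T) * y^card T)"
  proof (intro sum.cong refl)
    fix T assume T: "T \<in> Pow {..<n}"
    then have finT: "finite T" by (auto intro: finite_subset)
    have "(\<Prod>i\<in>T. w i) = (\<Prod>i\<in>T \<inter> {i. i \<in> U}. - y) * (\<Prod>i\<in>T \<inter> - {i. i \<in> U}. y)"
      unfolding w_def by (rule prod.If_cases[OF finT])
    also have "T \<inter> {i. i \<in> U} = U \<inter> T" by auto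
    also have "T \<inter> - {i. i \<in> U} = T - U" by auto
    also have "(\<Prod>i\<in>U \<inter> T. - y) * (\<Prod>i\<in>T - U. y) = (-y)^card (U \<inter> T) * y^card (T - U)"
      by (simp only: prod_constant)
    also have "\<dots> = (-1)^card (U \<inter> T) * y^card T"
    proof -
      have "card T = card (U \<inter> T) + card (T - U)"
      proof -
        have "T = (U \<inter> T) \<union> (T - U)" by auto
        then have "card T = card ((U \<inter> T) \<union> (T - U))" by simp
        also have "\<dots> = card (U \<inter> T) + card (T - U)" using finT by (intro card_Un_disjoint) auto
        finally show ?thesis .
      qed
      moreover have "(-y)^card (U \<inter> T) = (-1)^card (U \<inter> T) * y^card (U \<inter> T)" by (rule power_minus)
      ultimately show ?thesis by (simp only: power_add mult.assoc)
    qed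
    finally show "(\<Prod>i\<in>T. w i) * (\<Prod>i\<in>{..<n}-T. 1) = (-1)^card (U \<inter> T) * y^card T" by simp
  qed
  finally have "(\<Sum>T\<in>Pow {..<n}. (-1)^card (U \<inter> T) * y^card T) = (\<Prod>i\<in>{..<n}. w i + 1)" ..
  also have "\<dots> = (\<Prod>i\<in>{..<n}. if i \<in> U then 1 - y else 1 + y)"
    unfolding w_def by (intro prod.cong refl) simp
  also have "\<dots> = (\<Prod>i\<in>{..<n} \<inter> {i. i \<in> U}. 1 - y) * (\<Prod>i\<in>{..<n} \<inter> - {i. i \<in> U}. 1 + y)"
    by (rule prod.If_cases) simp
  also have "\<dots> = (1-y)^card U * (1+y)^(n - card U)"
  proof -
    have "{..<n} \<inter> {i. i \<in> U} = U" using U by auto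
    moreover have "card ({..<n} \<inter> - {i. i \<in> U}) = n - card U"
    proof -
      have "{..<n} \<inter> - {i. i \<in> U} = {..<n} - U" by auto
      then show ?thesis using U finU by (simp add: card_Diff_subset)
    qed
    ultimately show ?thesis by (simp only: prod_constant)
  qed
  finally show ?thesis .
qed

lemma count_supersets:
  assumes R: "R \<subseteq> {..<n}" and Rw: "card R \<le> w"
  shows "card {S. S \<subseteq> {..<n} \<and> card S = w \<and> R \<subseteq> S} = (n - card R) choose (w - card R)"
proof -
  have finR: "finite R" using R finite_subset by blast
  have "bij_betw (\<lambda>S. S - R) {S. S \<subseteq> {..<n} \<and> card S = w \<and> R \<subseteq> S} {V. V \<subseteq> {..<n} - R \<and> card V = w - card R}"
  proof (rule bij_betw_byWitness[where f'="\<lambda>V. V \<union> R"])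
    show "\<forall>S\<in>{S. S \<subseteq> {..<n} \<and> card S = w \<and> R \<subseteq> S}. S - R \<union> R = S" by auto
    show "\<forall>V\<in>{V. V \<subseteq> {..<n} - R \<and> card V = w - card R}. V \<union> R - R = V" by auto
    show "(\<lambda>S. S - R) ` {S. S \<subseteq> {..<n} \<and> card S = w \<and> R \<subseteq> S} \<subseteq> {V. V \<subseteq> {..<n} - R \<and> card V = w - card R}"
      using finR by (auto simp: card_Diff_subset)
    show "(\<lambda>V. V \<union> R) ` {V. V \<subseteq> {..<n} - R \<and> card V = w - card R} \<subseteq> {S. S \<subseteq> {..<n} \<and> card S = w \<and> R \<subseteq> S}"
    proof
      fix S assume "S \<in> (\<lambda>V. V \<union> R) ` {V. V \<subseteq> {..<n} - R \<and> card V = w - card R}"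
      then obtain V where V: "V \<subseteq> {..<n} - R" "card V = w - card R" and S: "S = V \<union> R" by auto
      have "finite V" using V(1) finite_subset by blast
      moreover have "V \<inter> R = {}" using V(1) by auto
      ultimately have "card S = card V + card R" using S finR by (simp add: card_Un_disjoint)
      then show "S \<in> {S. S \<subseteq> {..<n} \<and> card S = w \<and> R \<subseteq> S}" using S V R Rw by auto
    qed
  qed
  then have "card {S. S \<subseteq> {..<n} \<and> card S = w \<and> R \<subseteq> S} = card {V. V \<subseteq> {..<n} - R \<and> card V = w - card R}"
    by (rule bij_betw_same_card)
  also have "\<dots> = card ({..<n} - R) choose (w - card R)" by (rule n_subsets) simp
  also have "card ({..<n} - R) = n - card R" using R finR by (simp add: card_Diff_subset)
  finally show ?thesis .
qed


theorem proposition1: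
  fixes q n k :: nat
  assumes "q \<ge> 2"
    and "odd k" and "k > 0"
    and "k \<le> n div 2 - 2"
    and "(real (k+1) * (2 * real q - 1) - (real q - 1) * real n) \<ge> 0"
    and "(real (k+1) * (2 * real q - 1) - (real q - 1) * real n) * alpha0 q n (k+1)
           < alpha0 q n (k+2)"
  shows "\<not> (\<exists>psi. k_uniform q n k psi)"
proof
  assume "\<exists>psi. k_uniform q n k psi"
  then obtain psi where kuni: "k_uniform q n k psi" by blast
  have q0: "q > 0" using assms(1) by simp
  have kn: "k + 2 \<le> n div 2" using assms(3,4) by linarith
  have kn2: "k + 2 \<le> n" using kn by linarith
  define gr where "gr U = Nm q n U (rhoM psi)" for U
  have gKg: "gK q n psi U = of_real (gr U)" if "U \<subseteq> {..<n}" for U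
    using gK_nrm[OF that q0, of psi] by (simp add: gr_def Nm_def)
  define Pj where "Pj j = {U. U \<subseteq> {..<n} \<and> card U = j}" for j
  have finPj: "finite (Pj j)" for j
    by (rule finite_subset[of _ "Pow {..<n}"]) (auto simp: Pj_def)
  define a where "a j = (\<Sum>U\<in>Pj j. gr U)" for j
  define sh where "sh T = (\<Sum>U\<in>Pow {..<n}. (-1)^card (U \<inter> T) * gr U)" for T
  define sg where "sg t = (\<Sum>T\<in>Pj t. sh T)" for t
  have grc: "gr ({..<n} - U) = gr U" if U: "U \<subseteq> {..<n}" for U
  proof -
    have "(of_real (gr ({..<n} - U)) :: complex) = gK q n psi ({..<n} - U)" by (rule gKg[symmetric]) auto
    also have "\<dots> = gK q n psi U" by (rule gK_compl)
    also have "\<dots> = of_real (gr U)" by (rule gKg[OF U])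
    finally show ?thesis by (simp only: of_real_eq_iff)
  qed
  have sym: "a j = a (n - j)" if "j \<le> n" for j
    unfolding a_def
  proof (rule sum.reindex_bij_witness[where i="\<lambda>U. {..<n} - U" and j="\<lambda>U. {..<n} - U"])
    fix U assume "U \<in> Pj j"
    then have U: "U \<subseteq> {..<n}" "card U = j" by (auto simp: Pj_def)
    show "{..<n} - ({..<n} - U) = U" using U by auto
  next
    fix U assume "U \<in> Pj j"
    then have U: "U \<subseteq> {..<n}" "card U = j" by (auto simp: Pj_def)
    have "card ({..<n} - U) = n - j" using U that by (simp add: card_Diff_subset finite_subset)
    then show "{..<n} - U \<in> Pj (n - j)" by (auto simp: Pj_def)
  next
    fix U assume "U \<in> Pj (n - j)"
    then have U: "U \<subseteq> {..<n}" "card U = n - j" by (auto simp: Pj_def)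
    show "{..<n} - ({..<n} - U) = U" using U by auto
  next
    fix U assume "U \<in> Pj (n - j)"
    then have U: "U \<subseteq> {..<n}" "card U = n - j" by (auto simp: Pj_def)
    have "card ({..<n} - U) = j" using U that by (simp add: card_Diff_subset finite_subset)
    then show "{..<n} - U \<in> Pj j" by (auto simp: Pj_def)
  next
    fix U assume "U \<in> Pj j"
    then have U: "U \<subseteq> {..<n}" by (auto simp: Pj_def)
    show "gr ({..<n} - U) = gr U" by (rule grc[OF U])
  qed
  have low: "a j = real (n choose j) / real q ^ j" if "j \<le> k" for j
  proof -
    have "a j = (\<Sum>U\<in>Pj j. 1 / real q ^ j)"
      unfolding a_def
    proof (intro sum.cong refl)
      fix U assume "U \<in> Pj j"
      then have U: "U \<subseteq> {..<n}" "card U = j" by (auto simp: Pj_def)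
      have "of_real (gr U) = (1 / of_nat q ^ j :: complex)"
        using gK_low[OF kuni q0 U(1)] U that kn2 gKg[OF U(1)] by simp
      then have "of_real (gr U) = (of_real (1 / real q ^ j) :: complex)" by simp
      then show "gr U = 1 / real q ^ j" by (simp only: of_real_eq_iff)
    qed
    also have "\<dots> = real (card (Pj j)) / real q ^ j" by simp
    also have "card (Pj j) = n choose j" unfolding Pj_def using n_subsets[of "{..<n}" j] by simp
    finally show ?thesis .
  qed
  have shT: "0 \<le> sh T" if "T \<subseteq> {..<n}" for T
  proof -
    have "(\<Sum>U\<in>Pow {..<n}. (-1)^card (U \<inter> T) * gK q n psi U) = of_real (sh T)"
      unfolding sh_def of_real_sum by (intro sum.cong refl) (simp add: gKg)
    then show ?thesis using shadow_pos[OF that, of q psi] by simp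
  qed
  have sgpos: "0 \<le> sg t" for t
    unfolding sg_def by (intro sum_nonneg) (auto simp: Pj_def shT)
  have gen: "(\<Sum>j\<le>n. a j * (1-y)^j * (1+y)^(n-j)) = (\<Sum>t\<le>n. sg t * y^t)" for y :: real
  proof -
    have "(\<Sum>j\<le>n. a j * (1-y)^j * (1+y)^(n-j)) = (\<Sum>j\<le>n. \<Sum>U\<in>Pj j. gr U * (1-y)^card U * (1+y)^(n - card U))"
      unfolding a_def sum_distrib_right by (intro sum.cong refl) (auto simp: Pj_def)
    also have "\<dots> = (\<Sum>U\<in>Pow {..<n}. gr U * (1-y)^card U * (1+y)^(n - card U))"
      unfolding Pj_def by (rule sum_by_card[symmetric])
    also have "\<dots> = (\<Sum>U\<in>Pow {..<n}. gr U * (\<Sum>T\<in>Pow {..<n}. (-1)^card (U \<inter> T) * y^card T))"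
      by (intro sum.cong refl) (simp add: gen_fun_sets mult.assoc)
    also have "\<dots> = (\<Sum>T\<in>Pow {..<n}. sh T * y^card T)"
      unfolding sh_def sum_distrib_left sum_distrib_right
      by (subst sum.swap) (intro sum.cong refl, simp add: mult_ac)
    also have "\<dots> = (\<Sum>t\<le>n. \<Sum>T\<in>Pj t. sh T * y^card T)"
      unfolding Pj_def by (rule sum_by_card)
    also have "\<dots> = (\<Sum>t\<le>n. sg t * y^t)"
      unfolding sg_def sum_distrib_right by (intro sum.cong refl) (auto simp: Pj_def)
    finally show ?thesis .
  qed
  have pauli: "0 \<le> (\<Sum>j\<le>k+2. a j * real q ^ j * (-1)^(k+2-j) * real ((n-j) choose (k+2-j)))"
  proof -
    define w where "w = k + 2"
    define c where "c R = (-1)^(w - card R) * real q ^ card R * gr R" for R :: "nat set"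
    have "0 \<le> (\<Sum>S\<in>Pj w. \<Sum>R\<in>Pow S. (-1)^card (S - R) * real q ^ card R * gr R)"
    proof (rule sum_nonneg)
      fix S assume "S \<in> Pj w"
      then have "S \<subseteq> {..<n}" by (simp add: Pj_def)
      then show "0 \<le> (\<Sum>R\<in>Pow S. (-1)^card (S - R) * real q ^ card R * gr R)"
        using pauli_pos[of S n q "rhoM psi"] q0 by (simp add: gr_def)
    qed
    also have "(\<Sum>S\<in>Pj w. \<Sum>R\<in>Pow S. (-1)^card (S - R) * real q ^ card R * gr R)
        = (\<Sum>S\<in>Pj w. \<Sum>R\<in>Pow {..<n}. if R \<subseteq> S then c R else 0)"
    proof (rule sum.cong[OF refl])
      fix S assume S: "S \<in> Pj w"
      then have Sn: "S \<subseteq> {..<n}" and cS: "card S = w" by (auto simp: Pj_def)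
      have finS: "finite S" using Sn finite_subset by blast
      have "(\<Sum>R\<in>Pow S. (-1)^card (S - R) * real q ^ card R * gr R) = (\<Sum>R\<in>Pow S. c R)"
      proof (intro sum.cong refl)
        fix R assume "R \<in> Pow S"
        then have "card (S - R) = w - card R" using cS finS by (simp add: card_Diff_subset finite_subset)
        then show "(-1)^card (S - R) * real q ^ card R * gr R = c R" by (simp add: c_def)
      qed
      also have "\<dots> = (\<Sum>R\<in>Pow {..<n}. if R \<subseteq> S then c R else 0)"
      proof -
        have PS: "Pow S = {R\<in>Pow {..<n}. R \<subseteq> S}" using Sn by auto
        show ?thesis unfolding PS by (rule sum.inter_filter) simp
      qed
      finally show "(\<Sum>R\<in>Pow S. (-1)^card (S - R) * real q ^ card R * gr R) = (\<Sum>R\<in>Pow {..<n}. if R \<subseteq> S then c R else 0)" .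
    qed
    also have "\<dots> = (\<Sum>R\<in>Pow {..<n}. \<Sum>S\<in>Pj w. if R \<subseteq> S then c R else 0)"
      by (rule sum.swap)
    also have "\<dots> = (\<Sum>R\<in>Pow {..<n}. if card R \<le> w then c R * real ((n - card R) choose (w - card R)) else 0)"
    proof (intro sum.cong refl)
      fix R assume R: "R \<in> Pow {..<n}"
      have "(\<Sum>S\<in>Pj w. if R \<subseteq> S then c R else 0) = (\<Sum>S\<in>{S\<in>Pj w. R \<subseteq> S}. c R)"
        by (rule sum.inter_filter[symmetric]) (rule finPj)
      also have "\<dots> = real (card {S\<in>Pj w. R \<subseteq> S}) * c R" by simp
      also have "\<dots> = (if card R \<le> w then c R * real ((n - card R) choose (w - card R)) else 0)"
      proof (cases "card R \<le> w")
        case True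
        have "{S\<in>Pj w. R \<subseteq> S} = {S. S \<subseteq> {..<n} \<and> card S = w \<and> R \<subseteq> S}" by (auto simp: Pj_def)
        then show ?thesis using count_supersets[of R n w] R True by simp
      next
        case False
        have E: "{S\<in>Pj w. R \<subseteq> S} = {}"
        proof -
          have "card R \<le> card S" if "S \<in> Pj w" "R \<subseteq> S" for S
            using that by (intro card_mono) (auto simp: Pj_def finite_subset)
          then show ?thesis using False by (auto simp: Pj_def)
        qed
        show ?thesis unfolding E using False by simp
      qed
      finally show "(\<Sum>S\<in>Pj w. if R \<subseteq> S then c R else 0) = (if card R \<le> w then c R * real ((n - card R) choose (w - card R)) else 0)" .
    qed
    also have "\<dots> = (\<Sum>j\<le>n. \<Sum>R\<in>Pj j. if card R \<le> w then c R * real ((n - card R) choose (w - card R)) else 0)"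
      unfolding Pj_def by (rule sum_by_card)
    also have "\<dots> = (\<Sum>j\<le>n. if j \<le> w then a j * real q ^ j * (-1)^(w-j) * real ((n-j) choose (w-j)) else 0)"
    proof (intro sum.cong refl)
      fix j
      have "(\<Sum>R\<in>Pj j. if card R \<le> w then c R * real ((n - card R) choose (w - card R)) else 0)
          = (\<Sum>R\<in>Pj j. if j \<le> w then gr R * (real q ^ j * (-1)^(w-j) * real ((n-j) choose (w-j))) else 0)"
        by (intro sum.cong refl) (auto simp: Pj_def c_def mult_ac)
      also have "\<dots> = (if j \<le> w then a j * real q ^ j * (-1)^(w-j) * real ((n-j) choose (w-j)) else 0)"
      proof (cases "j \<le> w")
        case True
        have "(\<Sum>R\<in>Pj j. gr R * (real q ^ j * (-1)^(w-j) * real ((n-j) choose (w-j))))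
            = a j * (real q ^ j * (-1)^(w-j) * real ((n-j) choose (w-j)))"
          unfolding a_def by (rule sum_distrib_right[symmetric])
        then show ?thesis using True by (simp only: if_True mult.assoc)
      qed simp
      finally show "(\<Sum>R\<in>Pj j. if card R \<le> w then c R * real ((n - card R) choose (w - card R)) else 0)
          = (if j \<le> w then a j * real q ^ j * (-1)^(w-j) * real ((n-j) choose (w-j)) else 0)" .
    qed
    also have "\<dots> = (\<Sum>j\<le>w. a j * real q ^ j * (-1)^(w-j) * real ((n-j) choose (w-j)))"
    proof -
      have "(\<Sum>j\<le>n. if j \<le> w then a j * real q ^ j * (-1)^(w-j) * real ((n-j) choose (w-j)) else 0)
          = (\<Sum>j\<in>{..n} \<inter> {j. j \<le> w}. a j * real q ^ j * (-1)^(w-j) * real ((n-j) choose (w-j)))"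
        by (simp add: sum.inter_restrict)
      also have "{..n} \<inter> {j. j \<le> w} = {..w}" using kn2 by (auto simp: w_def)
      finally show ?thesis .
    qed
    finally show ?thesis by (simp add: w_def)
  qed
  show False
    by (rule core[where a=a and sg=sg and alf="alpha0 q n", OF assms(1,2) kn _ assms(5,6) sym low sgpos gen pauli])
       (simp add: alpha0_def)
qed

end
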